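(* Assume $\beta\ge0$, $\zeta_l>0$, $\zeta_r>0$ and $N_1\ge2$. Then $e^{tl}\to0$ as $t\to\infty$, the quantity $\mathcal{J}_n=\sum_{\nu\in M_n}2\,\mathrm{Im}\langle e_{\nu_+},R_\infty e_\nu\rangle$ is independent of $n\in\{1,\dots,N_1-1\}$, and its common value $\mathcal{J}(N_1,\dots,N_d)$ satisfies $$\mathcal{J}(N_1,\dots,N_d)=4(\alpha_{in}^l\alpha_{out}^r-\alpha_{out}^l\alpha_{in}^r)\int_0^\infty\mathrm{Tr}\,P_1e^{tl}(P_{N_1})\,dt=-4(\alpha_{in}^l\alpha_{out}^r-\alpha_{out}^l\alpha_{in}^r)\,\mathrm{Tr}\,P_1l^{-1}(P_{N_1}).$$
   Context: Let $d\ge1$ and $N_1,\dots,N_d\in\mathbb{N}$. Let $\mathfrak L=\{1,\dots,N_1\}\times\cdots\times\{1,\dots,N_d\}$, with elements $\nu=(\nu_1,\dots,\nu_d)$; $NN(\nu)$ is the set of nearest neighbours of $\nu$ in $\mathfrak L$ (points of $\mathfrak L$ at Euclidean distance $1$). For $i=1,\dots,N_1$ let $M_i=\{\nu\in\mathfrak L:\nu_1=i\}$, and for $\nu\notin M_{N_1}$ let $\nu_+=(\nu_1+1,\nu_2,\dots,\nu_d)$. Let $\{e_\nu\}_{\nu\in\mathfrak L}$ be the standard basis of $\mathbb{C}^{|\mathfrak L|}$, $p_\nu=|e_\nu\rangle\langle e_\nu|$, $P_1=\sum_{\nu\in M_1}p_\nu$, $P_{N_1}=\sum_{\nu\in M_{N_1}}p_\nu$.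 Given a bounded real $v$ on $\mathfrak L$, let $(h\psi)(\nu)=-\sum_{\mu\in NN(\nu)}\psi(\mu)+v(\nu)\psi(\nu)$. Let $\alpha_{in}^l,\alpha_{out}^l,\alpha_{in}^r,\alpha_{out}^r,\beta\ge0$, $\zeta_l=\alpha_{in}^l+\alpha_{out}^l$, $\zeta_r=\alpha_{in}^r+\alpha_{out}^r$. Define $l$ on $M_{|\mathfrak L|}(\mathbb{C})$ by $l(a)=-i[h,a]-\zeta_l\{P_1,a\}-\zeta_r\{P_{N_1},a\}+\beta\left(\sum_{\nu\in\mathfrak L}p_\nu ap_\nu-a\right)$, and $R_\infty=\int_0^\infty e^{tl}(2\alpha_{in}^lP_1+2\alpha_{in}^rP_{N_1})\,dt$. *)

theory Defs
  imports "HOL-Analysis.Analysis"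
begin

text \<open>Lattice points are lists of length d = length N, where N = [N_1,...,N_d].
  Operators on C^|L| are represented as functions site => site => complex
  (matrix entries), with indices meaningful on the lattice only.\<close>

type_synonym site = "nat list"
type_synonym cmat = "site \<Rightarrow> site \<Rightarrow> complex"

definition lattice :: "nat list \<Rightarrow> site set" where
  "lattice N = {\<nu>. length \<nu> = length N \<and> (\<forall>i<length N. 1 \<le> \<nu>!i \<and> \<nu>!i \<le> N!i)}"

definition nn :: "nat list \<Rightarrow> site \<Rightarrow> site \<Rightarrow> bool" where
  "nn N \<mu> \<nu> \<longleftrightarrow> \<mu> \<in> lattice N \<and> \<nu> \<in> lattice N \<and>
     (\<Sum>i<length N. (int (\<mu>!i) - int (\<nu>!i))^2) = 1"

definition supported :: "nat list \<Rightarrow> cmat \<Rightarrow> bool" where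
  "supported N a \<longleftrightarrow> (\<forall>\<mu> \<nu>. \<mu> \<notin> lattice N \<or> \<nu> \<notin> lattice N \<longrightarrow> a \<mu> \<nu> = 0)"

definition mmul :: "nat list \<Rightarrow> cmat \<Rightarrow> cmat \<Rightarrow> cmat" where
  "mmul N a b = (\<lambda>\<mu> \<nu>. \<Sum>\<kappa>\<in>lattice N. a \<mu> \<kappa> * b \<kappa> \<nu>)"

definition tr :: "nat list \<Rightarrow> cmat \<Rightarrow> complex" where
  "tr N a = (\<Sum>\<nu>\<in>lattice N. a \<nu> \<nu>)"

definition ham :: "nat list \<Rightarrow> (site \<Rightarrow> real) \<Rightarrow> cmat" where
  "ham N v = (\<lambda>\<nu> \<mu>. if \<nu> \<in> lattice N \<and> \<mu> \<in> lattice N then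
      (if nn N \<nu> \<mu> then -1 else 0) + (if \<mu> = \<nu> then complex_of_real (v \<nu>) else 0) else 0)"

definition pr :: "site \<Rightarrow> cmat" where
  "pr \<kappa> = (\<lambda>\<mu> \<nu>. if \<mu> = \<kappa> \<and> \<nu> = \<kappa> then 1 else 0)"

text \<open>M_i = {nu in L. nu_1 = i} (first coordinate is index 0 of the list).\<close>
definition slice :: "nat list \<Rightarrow> nat \<Rightarrow> site set" where
  "slice N i = {\<nu> \<in> lattice N. \<nu>!0 = i}"

definition projS :: "site set \<Rightarrow> cmat" where
  "projS S = (\<lambda>\<mu> \<nu>. \<Sum>\<kappa>\<in>S. pr \<kappa> \<mu> \<nu>)"

definition P1 :: "nat list \<Rightarrow> cmat" where
  "P1 N = projS (slice N 1)"

definition PN :: "nat list \<Rightarrow> cmat" where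
  "PN N = projS (slice N (N!0))"

definition lind :: "nat list \<Rightarrow> (site \<Rightarrow> real) \<Rightarrow> real \<Rightarrow> real \<Rightarrow> real \<Rightarrow> cmat \<Rightarrow> cmat" where
  "lind N v zl zr \<beta> a = (\<lambda>\<mu> \<nu>.
      - \<i> * (mmul N (ham N v) a \<mu> \<nu> - mmul N a (ham N v) \<mu> \<nu>)
      - complex_of_real zl * (mmul N (P1 N) a \<mu> \<nu> + mmul N a (P1 N) \<mu> \<nu>)
      - complex_of_real zr * (mmul N (PN N) a \<mu> \<nu> + mmul N a (PN N) \<mu> \<nu>)
      + complex_of_real \<beta> * ((\<Sum>\<kappa>\<in>lattice N. mmul N (mmul N (pr \<kappa>) a) (pr \<kappa>) \<mu> \<nu>) - a \<mu> \<nu>))"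

definition expl :: "nat list \<Rightarrow> (site \<Rightarrow> real) \<Rightarrow> real \<Rightarrow> real \<Rightarrow> real \<Rightarrow> real \<Rightarrow> cmat \<Rightarrow> cmat" where
  "expl N v zl zr \<beta> t a = (\<lambda>\<mu> \<nu>.
      \<Sum>k. complex_of_real (t ^ k / fact k) * ((lind N v zl zr \<beta> ^^ k) a \<mu> \<nu>))"

definition Rinf :: "nat list \<Rightarrow> (site \<Rightarrow> real) \<Rightarrow> real \<Rightarrow> real \<Rightarrow> real \<Rightarrow> real \<Rightarrow> real \<Rightarrow> cmat" where
  "Rinf N v zl zr \<beta> ail air = (\<lambda>\<mu> \<nu>. integral {0..} (\<lambda>t.
      expl N v zl zr \<beta> t (\<lambda>x y. 2 * complex_of_real ail * P1 N x y + 2 * complex_of_real air * PN N x y) \<mu> \<nu>))"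

definition splus :: "site \<Rightarrow> site" where
  "splus \<nu> = \<nu>[0 := \<nu>!0 + 1]"

definition current :: "nat list \<Rightarrow> (site \<Rightarrow> real) \<Rightarrow> real \<Rightarrow> real \<Rightarrow> real \<Rightarrow> real \<Rightarrow> real \<Rightarrow> nat \<Rightarrow> real" where
  "current N v zl zr \<beta> ail air n =
     (\<Sum>\<nu>\<in>slice N n. 2 * Im (Rinf N v zl zr \<beta> ail air (splus \<nu>) \<nu>))"

definition linv :: "nat list \<Rightarrow> (site \<Rightarrow> real) \<Rightarrow> real \<Rightarrow> real \<Rightarrow> real \<Rightarrow> cmat \<Rightarrow> cmat" where
  "linv N v zl zr \<beta> b = (THE a. supported N a \<and> lind N v zl zr \<beta> a = b)"

end

theory Submission
  imports Defs
begin

lemma finite_lattice: "finite (lattice N)"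
proof -
  have "lattice N \<subseteq> {xs. set xs \<subseteq> {0..Max (set N)} \<and> length xs = length N}"
    unfolding lattice_def
    by (auto simp: in_set_conv_nth) (metis Max_ge List.finite_set dual_order.trans nth_mem)
  moreover have "finite {xs. set xs \<subseteq> {0..Max (set N)} \<and> length xs = length N}"
    by (rule finite_lists_length_eq) simp
  ultimately show ?thesis by (rule finite_subset)
qed

lemma finite_slice: "finite (slice N i)"
  unfolding slice_def using finite_lattice by simp

lemma sum_if_eq: "finite A \<Longrightarrow> (\<Sum>x\<in>A. if x = c then f x else 0) = (if c \<in> A then f c else 0)"
  by (simp add: sum.delta')

lemma sum_if_eq2: "finite A \<Longrightarrow> (\<Sum>x\<in>A. if x = c \<and> P then f x else 0) = (if c \<in> A \<and> P then f c else 0)"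
  by (cases P) (simp_all add: sum.delta')

lemma projS_eq: "finite S \<Longrightarrow> projS S \<mu> \<nu> = (if \<mu> = \<nu> \<and> \<mu> \<in> S then 1 else 0)"
proof -
  assume "finite S"
  have "projS S \<mu> \<nu> = (\<Sum>\<kappa>\<in>S. if \<kappa> = \<mu> \<and> \<mu> = \<nu> then 1 else 0)"
    unfolding projS_def pr_def by (rule sum.cong) auto
  also have "\<dots> = (if \<mu> = \<nu> \<and> \<mu> \<in> S then 1 else 0)"
    using \<open>finite S\<close> by (subst sum_if_eq2) auto
  finally show ?thesis .
qed

lemma P1_eq: "P1 N \<mu> \<nu> = (if \<mu> = \<nu> \<and> \<mu> \<in> slice N 1 then 1 else 0)"
  unfolding P1_def by (simp add: projS_eq finite_slice)

lemma PN_eq: "PN N \<mu> \<nu> = (if \<mu> = \<nu> \<and> \<mu> \<in> slice N (N!0) then 1 else 0)"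
  unfolding PN_def by (simp add: projS_eq finite_slice)

lemma slice_sub: "slice N i \<subseteq> lattice N" unfolding slice_def by auto

lemma mmul_proj_left: "S \<subseteq> lattice N \<Longrightarrow> finite S \<Longrightarrow>
   mmul N (projS S) a \<mu> \<nu> = (if \<mu> \<in> S then a \<mu> \<nu> else 0)"
proof -
  assume "S \<subseteq> lattice N" "finite S"
  have "mmul N (projS S) a \<mu> \<nu> = (\<Sum>\<kappa>\<in>lattice N. if \<kappa> = \<mu> \<and> \<mu> \<in> S then a \<kappa> \<nu> else 0)"
    unfolding mmul_def using \<open>finite S\<close> by (intro sum.cong) (auto simp: projS_eq)
  also have "\<dots> = (if \<mu> \<in> S then a \<mu> \<nu> else 0)"
    using \<open>S \<subseteq> lattice N\<close> by (subst sum_if_eq2) (auto simp: finite_lattice)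
  finally show ?thesis .
qed

lemma mmul_proj_right: "S \<subseteq> lattice N \<Longrightarrow> finite S \<Longrightarrow>
   mmul N a (projS S) \<mu> \<nu> = (if \<nu> \<in> S then a \<mu> \<nu> else 0)"
proof -
  assume "S \<subseteq> lattice N" "finite S"
  have "mmul N a (projS S) \<mu> \<nu> = (\<Sum>\<kappa>\<in>lattice N. if \<kappa> = \<nu> \<and> \<nu> \<in> S then a \<mu> \<kappa> else 0)"
    unfolding mmul_def using \<open>finite S\<close> by (intro sum.cong) (auto simp: projS_eq)
  also have "\<dots> = (if \<nu> \<in> S then a \<mu> \<nu> else 0)"
    using \<open>S \<subseteq> lattice N\<close> by (subst sum_if_eq2) (auto simp: finite_lattice)
  finally show ?thesis .
qed


lemma mmul_pr_left: "\<kappa> \<in> lattice N \<Longrightarrow> mmul N (pr \<kappa>) a \<mu> \<nu> = (if \<mu> = \<kappa> then a \<kappa> \<nu> else 0)"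
proof -
  assume k: "\<kappa> \<in> lattice N"
  have "mmul N (pr \<kappa>) a \<mu> \<nu> = (\<Sum>x\<in>lattice N. if x = \<kappa> \<and> \<mu> = \<kappa> then a x \<nu> else 0)"
    unfolding mmul_def pr_def by (intro sum.cong) auto
  also have "\<dots> = (if \<kappa> \<in> lattice N \<and> \<mu> = \<kappa> then a \<kappa> \<nu> else 0)"
    by (rule sum_if_eq2[OF finite_lattice])
  finally show ?thesis using k by simp
qed

lemma mmul_pr_right: "\<kappa> \<in> lattice N \<Longrightarrow> mmul N a (pr \<kappa>) \<mu> \<nu> = (if \<nu> = \<kappa> then a \<mu> \<kappa> else 0)"
proof -
  assume k: "\<kappa> \<in> lattice N"
  have "mmul N a (pr \<kappa>) \<mu> \<nu> = (\<Sum>x\<in>lattice N. if x = \<kappa> \<and> \<nu> = \<kappa> then a \<mu> x else 0)"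
    unfolding mmul_def pr_def by (intro sum.cong) auto
  also have "\<dots> = (if \<kappa> \<in> lattice N \<and> \<nu> = \<kappa> then a \<mu> \<kappa> else 0)"
    by (rule sum_if_eq2[OF finite_lattice])
  finally show ?thesis using k by simp
qed

lemma deph_sum: "(\<Sum>\<kappa>\<in>lattice N. mmul N (mmul N (pr \<kappa>) a) (pr \<kappa>) \<mu> \<nu>)
   = (if \<mu> = \<nu> \<and> \<mu> \<in> lattice N then a \<mu> \<mu> else 0)"
proof -
  have "(\<Sum>\<kappa>\<in>lattice N. mmul N (mmul N (pr \<kappa>) a) (pr \<kappa>) \<mu> \<nu>)
       = (\<Sum>\<kappa>\<in>lattice N. if \<kappa> = \<mu> \<and> \<mu> = \<nu> then a \<mu> \<nu> else 0)"
  proof (rule sum.cong[OF refl])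
    fix \<kappa> assume k: "\<kappa> \<in> lattice N"
    show "mmul N (mmul N (pr \<kappa>) a) (pr \<kappa>) \<mu> \<nu> = (if \<kappa> = \<mu> \<and> \<mu> = \<nu> then a \<mu> \<nu> else 0)"
      unfolding mmul_pr_right[OF k] mmul_pr_left[OF k] by auto
  qed
  also have "\<dots> = (if \<mu> \<in> lattice N \<and> \<mu> = \<nu> then a \<mu> \<nu> else 0)"
    by (rule sum_if_eq2[OF finite_lattice])
  finally show ?thesis by auto
qed

definition ind :: "site set \<Rightarrow> site \<Rightarrow> real" where
  "ind S \<mu> = (if \<mu> \<in> S then 1 else 0)"

definition dco :: "nat list \<Rightarrow> real \<Rightarrow> real \<Rightarrow> real \<Rightarrow> site \<Rightarrow> site \<Rightarrow> real" where
  "dco N zl zr \<beta> \<mu> \<nu> = zl * (ind (slice N 1) \<mu> + ind (slice N 1) \<nu>)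
     + zr * (ind (slice N (N!0)) \<mu> + ind (slice N (N!0)) \<nu>) + \<beta> * (if \<mu> = \<nu> then 0 else 1)"

definition Cf :: "nat list \<Rightarrow> (site \<Rightarrow> real) \<Rightarrow> real \<Rightarrow> real \<Rightarrow> real \<Rightarrow> site \<Rightarrow> site \<Rightarrow> site \<Rightarrow> site \<Rightarrow> complex" where
  "Cf N v zl zr \<beta> \<mu> \<nu> \<kappa> \<rho> = - \<i> * (ham N v \<mu> \<kappa> * (if \<rho> = \<nu> then 1 else 0)
        - (if \<kappa> = \<mu> then 1 else 0) * ham N v \<rho> \<nu>)
     - (if \<kappa> = \<mu> \<and> \<rho> = \<nu> then complex_of_real (dco N zl zr \<beta> \<mu> \<nu>) else 0)"

lemma ham_out: "\<mu> \<notin> lattice N \<or> \<kappa> \<notin> lattice N \<Longrightarrow> ham N v \<mu> \<kappa> = 0"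
  unfolding ham_def by auto

lemma lind_eq:
  assumes a: "supported N a"
  shows "lind N v zl zr \<beta> a \<mu> \<nu> = (if \<mu> \<in> lattice N \<and> \<nu> \<in> lattice N then
     - \<i> * (mmul N (ham N v) a \<mu> \<nu> - mmul N a (ham N v) \<mu> \<nu>)
     - complex_of_real (dco N zl zr \<beta> \<mu> \<nu>) * a \<mu> \<nu> else 0)"
proof (cases "\<mu> \<in> lattice N \<and> \<nu> \<in> lattice N")
  case True
  then show ?thesis unfolding lind_def P1_def PN_def
    by (simp add: mmul_proj_left mmul_proj_right slice_sub finite_slice deph_sum dco_def ind_def
        algebra_simps)
next
  case False
  have z: "a \<mu> \<nu> = 0" using a False unfolding supported_def by blast
  have h1: "mmul N (ham N v) a \<mu> \<nu> = 0"
  proof (cases "\<mu> \<in> lattice N")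
    case True
    then have "\<nu> \<notin> lattice N" using False by blast
    then show ?thesis using a unfolding mmul_def supported_def by simp
  next
    case False
    then show ?thesis unfolding mmul_def by (simp add: ham_out)
  qed
  have h2: "mmul N a (ham N v) \<mu> \<nu> = 0"
  proof (cases "\<mu> \<in> lattice N")
    case True
    then have "\<nu> \<notin> lattice N" using False by blast
    then show ?thesis unfolding mmul_def by (simp add: ham_out)
  next
    case False
    then show ?thesis using a unfolding mmul_def supported_def by simp
  qed
  have h3: "(if \<mu> = \<nu> \<and> \<mu> \<in> lattice N then a \<mu> \<mu> else 0) = 0" using z by auto
  show ?thesis using False z h1 h2 unfolding lind_def P1_def PN_def
    by (simp add: mmul_proj_left mmul_proj_right slice_sub finite_slice deph_sum h3)
qed

lemma supported_lind: "supported N a \<Longrightarrow> supported N (lind N v zl zr \<beta> a)"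
  unfolding supported_def by (auto simp: lind_eq[unfolded supported_def])

lemma lind_lincomb:
  assumes a: "supported N a" and m: "\<mu> \<in> lattice N" "\<nu> \<in> lattice N"
  shows "lind N v zl zr \<beta> a \<mu> \<nu> = (\<Sum>\<kappa>\<in>lattice N. \<Sum>\<rho>\<in>lattice N. Cf N v zl zr \<beta> \<mu> \<nu> \<kappa> \<rho> * a \<kappa> \<rho>)"
proof -
  let ?L = "lattice N"
  have s1: "(\<Sum>\<kappa>\<in>?L. \<Sum>\<rho>\<in>?L. (ham N v \<mu> \<kappa> * (if \<rho> = \<nu> then 1 else 0)) * a \<kappa> \<rho>)
        = mmul N (ham N v) a \<mu> \<nu>"
  proof -
    have "(\<Sum>\<kappa>\<in>?L. \<Sum>\<rho>\<in>?L. (ham N v \<mu> \<kappa> * (if \<rho> = \<nu> then 1 else 0)) * a \<kappa> \<rho>)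
        = (\<Sum>\<kappa>\<in>?L. \<Sum>\<rho>\<in>?L. if \<rho> = \<nu> then ham N v \<mu> \<kappa> * a \<kappa> \<rho> else 0)"
      by (intro sum.cong) auto
    also have "\<dots> = (\<Sum>\<kappa>\<in>?L. ham N v \<mu> \<kappa> * a \<kappa> \<nu>)"
      using m by (simp add: sum_if_eq finite_lattice)
    finally show ?thesis unfolding mmul_def .
  qed
  have s2: "(\<Sum>\<kappa>\<in>?L. \<Sum>\<rho>\<in>?L. ((if \<kappa> = \<mu> then 1 else 0) * ham N v \<rho> \<nu>) * a \<kappa> \<rho>)
        = mmul N a (ham N v) \<mu> \<nu>"
  proof -
    have "(\<Sum>\<kappa>\<in>?L. \<Sum>\<rho>\<in>?L. ((if \<kappa> = \<mu> then 1 else 0) * ham N v \<rho> \<nu>) * a \<kappa> \<rho>)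
        = (\<Sum>\<kappa>\<in>?L. if \<kappa> = \<mu> then (\<Sum>\<rho>\<in>?L. a \<kappa> \<rho> * ham N v \<rho> \<nu>) else 0)"
      by (intro sum.cong) (auto simp: sum_distrib_left mult.commute)
    also have "\<dots> = (\<Sum>\<rho>\<in>?L. a \<mu> \<rho> * ham N v \<rho> \<nu>)"
      using m by (simp add: sum_if_eq finite_lattice)
    finally show ?thesis unfolding mmul_def .
  qed
  have s3: "(\<Sum>\<kappa>\<in>?L. \<Sum>\<rho>\<in>?L. (if \<kappa> = \<mu> \<and> \<rho> = \<nu> then complex_of_real (dco N zl zr \<beta> \<mu> \<nu>) else 0) * a \<kappa> \<rho>)
      = complex_of_real (dco N zl zr \<beta> \<mu> \<nu>) * a \<mu> \<nu>"
  proof -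
    have "(\<Sum>\<kappa>\<in>?L. \<Sum>\<rho>\<in>?L. (if \<kappa> = \<mu> \<and> \<rho> = \<nu> then complex_of_real (dco N zl zr \<beta> \<mu> \<nu>) else 0) * a \<kappa> \<rho>)
       = (\<Sum>\<kappa>\<in>?L. if \<kappa> = \<mu> then (\<Sum>\<rho>\<in>?L. if \<rho> = \<nu> then complex_of_real (dco N zl zr \<beta> \<mu> \<nu>) * a \<kappa> \<rho> else 0) else 0)"
      by (auto intro!: sum.cong)
    also have "\<dots> = complex_of_real (dco N zl zr \<beta> \<mu> \<nu>) * a \<mu> \<nu>"
      using m by (simp add: sum_if_eq finite_lattice)
    finally show ?thesis .
  qed
  have "(\<Sum>\<kappa>\<in>?L. \<Sum>\<rho>\<in>?L. Cf N v zl zr \<beta> \<mu> \<nu> \<kappa> \<rho> * a \<kappa> \<rho>)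
     = - \<i> * (\<Sum>\<kappa>\<in>?L. \<Sum>\<rho>\<in>?L. (ham N v \<mu> \<kappa> * (if \<rho> = \<nu> then 1 else 0)) * a \<kappa> \<rho>)
       + \<i> * (\<Sum>\<kappa>\<in>?L. \<Sum>\<rho>\<in>?L. ((if \<kappa> = \<mu> then 1 else 0) * ham N v \<rho> \<nu>) * a \<kappa> \<rho>)
       - (\<Sum>\<kappa>\<in>?L. \<Sum>\<rho>\<in>?L. (if \<kappa> = \<mu> \<and> \<rho> = \<nu> then complex_of_real (dco N zl zr \<beta> \<mu> \<nu>) else 0) * a \<kappa> \<rho>)"
    unfolding Cf_def sum_distrib_left sum_subtractf[symmetric] sum.distrib[symmetric]
    by (intro sum.cong refl) (simp add: algebra_simps)
  also have "\<dots> = lind N v zl zr \<beta> a \<mu> \<nu>"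
    unfolding s1 s2 s3 lind_eq[OF a] using m by (simp add: algebra_simps)
  finally show ?thesis by simp
qed

locale sysl =
  fixes N :: "nat list" and v :: "site \<Rightarrow> real" and zl zr \<beta> :: real
begin

abbreviation "L \<equiv> lattice N"
abbreviation "l \<equiv> lind N v zl zr \<beta>"
abbreviation "C \<equiv> Cf N v zl zr \<beta>"
abbreviation "E \<equiv> expl N v zl zr \<beta>"

definition nrm :: "cmat \<Rightarrow> real" where
  "nrm a = (\<Sum>\<mu>\<in>L. \<Sum>\<nu>\<in>L. cmod (a \<mu> \<nu>))"

definition Kc :: real where
  "Kc = (\<Sum>\<mu>\<in>L. \<Sum>\<nu>\<in>L. \<Sum>\<kappa>\<in>L. \<Sum>\<rho>\<in>L. cmod (C \<mu> \<nu> \<kappa> \<rho>))"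

lemma Kc_nonneg: "Kc \<ge> 0" unfolding Kc_def by (intro sum_nonneg) auto
lemma nrm_nonneg: "nrm a \<ge> 0" unfolding nrm_def by (intro sum_nonneg) auto

lemma entry_le_nrm: "\<mu> \<in> L \<Longrightarrow> \<nu> \<in> L \<Longrightarrow> cmod (a \<mu> \<nu>) \<le> nrm a"
proof -
  assume m: "\<mu> \<in> L" "\<nu> \<in> L"
  have "cmod (a \<mu> \<nu>) \<le> (\<Sum>\<nu>\<in>L. cmod (a \<mu> \<nu>))"
    by (rule member_le_sum) (use m finite_lattice in auto)
  also have "\<dots> \<le> nrm a" unfolding nrm_def
    by (rule member_le_sum[where f="\<lambda>\<mu>. \<Sum>\<nu>\<in>L. cmod (a \<mu> \<nu>)"]) (use m finite_lattice in \<open>auto intro: sum_nonneg\<close>)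
  finally show ?thesis .
qed

lemma supp_out: "supported N a \<Longrightarrow> \<mu> \<notin> L \<or> \<nu> \<notin> L \<Longrightarrow> a \<mu> \<nu> = 0"
  unfolding supported_def by blast

lemma supp_pow: "supported N a \<Longrightarrow> supported N ((l ^^ k) a)"
  by (induction k) (auto simp: supported_lind)

lemma lind_sum:
  assumes S: "finite S" and f: "\<And>s. s \<in> S \<Longrightarrow> supported N (f s)"
  shows "l (\<lambda>\<mu> \<nu>. \<Sum>s\<in>S. c s * f s \<mu> \<nu>) = (\<lambda>\<mu> \<nu>. \<Sum>s\<in>S. c s * l (f s) \<mu> \<nu>)"
proof (intro ext)
  fix \<mu> \<nu>
  have sp: "supported N (\<lambda>\<mu> \<nu>. \<Sum>s\<in>S. c s * f s \<mu> \<nu>)"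
    using f unfolding supported_def by auto
  show "l (\<lambda>\<mu> \<nu>. \<Sum>s\<in>S. c s * f s \<mu> \<nu>) \<mu> \<nu> = (\<Sum>s\<in>S. c s * l (f s) \<mu> \<nu>)"
  proof (cases "\<mu> \<in> L \<and> \<nu> \<in> L")
    case True
    have "l (\<lambda>\<mu> \<nu>. \<Sum>s\<in>S. c s * f s \<mu> \<nu>) \<mu> \<nu>
        = (\<Sum>\<kappa>\<in>L. \<Sum>\<rho>\<in>L. C \<mu> \<nu> \<kappa> \<rho> * (\<Sum>s\<in>S. c s * f s \<kappa> \<rho>))"
      using True by (simp add: lind_lincomb[OF sp])
    also have "\<dots> = (\<Sum>s\<in>S. c s * (\<Sum>\<kappa>\<in>L. \<Sum>\<rho>\<in>L. C \<mu> \<nu> \<kappa> \<rho> * f s \<kappa> \<rho>))"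
      by (simp add: sum_distrib_left sum_distrib_right mult_ac sum.swap[of _ S])
    also have "\<dots> = (\<Sum>s\<in>S. c s * l (f s) \<mu> \<nu>)"
      using True f by (intro sum.cong refl) (simp add: lind_lincomb)
    finally show ?thesis .
  next
    case False
    then show ?thesis using supported_lind[OF sp] supported_lind[OF f]
      by (simp add: supp_out)
  qed
qed

lemma pow_sum:
  assumes S: "finite S" and f: "\<And>s. s \<in> S \<Longrightarrow> supported N (f s)"
  shows "(l ^^ k) (\<lambda>\<mu> \<nu>. \<Sum>s\<in>S. c s * f s \<mu> \<nu>) = (\<lambda>\<mu> \<nu>. \<Sum>s\<in>S. c s * (l ^^ k) (f s) \<mu> \<nu>)"
proof (induction k)
  case 0 show ?case by simp
next
  case (Suc k)
  show ?case using lind_sum[OF S, of "\<lambda>s. (l ^^ k) (f s)" c] f supp_pow Suc by simp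
qed

lemma nrm_lind: "supported N a \<Longrightarrow> nrm (l a) \<le> Kc * nrm a"
proof -
  assume a: "supported N a"
  have "cmod (l a \<mu> \<nu>) \<le> (\<Sum>\<kappa>\<in>L. \<Sum>\<rho>\<in>L. cmod (C \<mu> \<nu> \<kappa> \<rho>)) * nrm a"
    if m: "\<mu> \<in> L" "\<nu> \<in> L" for \<mu> \<nu>
  proof -
    have "cmod (l a \<mu> \<nu>) \<le> (\<Sum>\<kappa>\<in>L. \<Sum>\<rho>\<in>L. cmod (C \<mu> \<nu> \<kappa> \<rho> * a \<kappa> \<rho>))"
      unfolding lind_lincomb[OF a m]
      by (rule order.trans[OF norm_sum]) (intro sum_mono norm_sum)
    also have "\<dots> \<le> (\<Sum>\<kappa>\<in>L. \<Sum>\<rho>\<in>L. cmod (C \<mu> \<nu> \<kappa> \<rho>) * nrm a)"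
      by (intro sum_mono) (auto simp: norm_mult intro: mult_left_mono entry_le_nrm)
    finally show ?thesis by (simp add: sum_distrib_right)
  qed
  then have "nrm (l a) \<le> (\<Sum>\<mu>\<in>L. \<Sum>\<nu>\<in>L. (\<Sum>\<kappa>\<in>L. \<Sum>\<rho>\<in>L. cmod (C \<mu> \<nu> \<kappa> \<rho>)) * nrm a)"
    unfolding nrm_def by (intro sum_mono) auto
  then show ?thesis by (simp add: Kc_def sum_distrib_right)
qed

lemma nrm_pow: "supported N a \<Longrightarrow> nrm ((l ^^ k) a) \<le> Kc ^ k * nrm a"
proof (induction k)
  case 0 then show ?case by simp
next
  case (Suc k)
  have "nrm ((l ^^ Suc k) a) \<le> Kc * nrm ((l ^^ k) a)"
    using nrm_lind[OF supp_pow[OF Suc.prems]] by simp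
  also have "\<dots> \<le> Kc * (Kc ^ k * nrm a)"
    using Suc Kc_nonneg by (intro mult_left_mono) auto
  finally show ?case by simp
qed

lemma entry_pow: "supported N a \<Longrightarrow> cmod ((l ^^ k) a \<mu> \<nu>) \<le> Kc ^ k * nrm a"
proof (cases "\<mu> \<in> L \<and> \<nu> \<in> L")
  case True
  assume a: "supported N a"
  then show ?thesis using True entry_le_nrm nrm_pow order.trans by blast
next
  case False
  assume a: "supported N a"
  then show ?thesis using False supp_out[OF supp_pow[OF a]] Kc_nonneg nrm_nonneg by simp
qed

definition cs :: "cmat \<Rightarrow> site \<Rightarrow> site \<Rightarrow> nat \<Rightarrow> complex" where
  "cs a \<mu> \<nu> k = (l ^^ k) a \<mu> \<nu> / of_nat (fact k)"

lemma cs_summable: "supported N a \<Longrightarrow> summable (\<lambda>k. cs a \<mu> \<nu> k * z ^ k)"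
proof -
  assume a: "supported N a"
  have "summable (\<lambda>k. nrm a * (inverse (fact k) * (Kc * cmod z) ^ k))"
    by (intro summable_mult summable_exp)
  then show ?thesis
  proof (rule summable_comparison_test')
    fix k :: nat
    have "norm (cs a \<mu> \<nu> k * z ^ k) = cmod ((l ^^ k) a \<mu> \<nu>) / fact k * cmod z ^ k"
      unfolding cs_def by (simp add: norm_mult norm_divide norm_power)
    also have "\<dots> \<le> Kc ^ k * nrm a / fact k * cmod z ^ k"
      by (intro mult_right_mono divide_right_mono entry_pow a) auto
    also have "\<dots> = nrm a * (inverse (fact k) * (Kc * cmod z) ^ k)"
      by (simp add: field_simps power_mult_distrib)
    finally show "norm (cs a \<mu> \<nu> k * z ^ k) \<le> nrm a * (inverse (fact k) * (Kc * cmod z) ^ k)" .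
  qed
qed

lemma expl_series: "E t a \<mu> \<nu> = (\<Sum>k. cs a \<mu> \<nu> k * (complex_of_real t) ^ k)"
  unfolding expl_def cs_def by (simp add: of_real_divide of_real_power field_simps)

lemma expl_summable: "supported N a \<Longrightarrow> summable (\<lambda>k. complex_of_real (t ^ k / fact k) * ((l ^^ k) a \<mu> \<nu>))"
  using cs_summable[of a \<mu> \<nu> "complex_of_real t"] unfolding cs_def
  by (simp add: of_real_divide of_real_power field_simps)

lemma expl_supported: "supported N a \<Longrightarrow> supported N (E t a)"
  unfolding supported_def expl_def using supp_pow[unfolded supported_def] by simp

lemma expl_zero: "E 0 a = a"
proof (intro ext)
  fix \<mu> \<nu>
  have "E 0 a \<mu> \<nu> = (\<Sum>k. cs a \<mu> \<nu> k * 0 ^ k)" unfolding expl_series by simp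
  also have "\<dots> = a \<mu> \<nu>" by (subst powser_zero) (simp add: cs_def)
  finally show "E 0 a \<mu> \<nu> = a \<mu> \<nu>" .
qed

lemma expl_sum:
  assumes S: "finite S" and f: "\<And>s. s \<in> S \<Longrightarrow> supported N (f s)"
  shows "E t (\<lambda>\<mu> \<nu>. \<Sum>s\<in>S. c s * f s \<mu> \<nu>) = (\<lambda>\<mu> \<nu>. \<Sum>s\<in>S. c s * E t (f s) \<mu> \<nu>)"
proof (intro ext)
  fix \<mu> \<nu>
  have "E t (\<lambda>\<mu> \<nu>. \<Sum>s\<in>S. c s * f s \<mu> \<nu>) \<mu> \<nu>
     = (\<Sum>k. \<Sum>s\<in>S. c s * (complex_of_real (t ^ k / fact k) * (l ^^ k) (f s) \<mu> \<nu>))"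
  proof -
    have "(l ^^ k) (\<lambda>\<mu> \<nu>. \<Sum>s\<in>S. c s * f s \<mu> \<nu>) \<mu> \<nu> = (\<Sum>s\<in>S. c s * (l ^^ k) (f s) \<mu> \<nu>)" for k
      using pow_sum[OF S f, where k=k and c=c] by simp
    then show ?thesis unfolding expl_def by (simp add: sum_distrib_left mult_ac)
  qed
  also have "\<dots> = (\<Sum>s\<in>S. \<Sum>k. c s * (complex_of_real (t ^ k / fact k) * (l ^^ k) (f s) \<mu> \<nu>))"
    by (rule suminf_sum) (intro summable_mult expl_summable f)
  also have "\<dots> = (\<Sum>s\<in>S. c s * E t (f s) \<mu> \<nu>)"
    unfolding expl_def by (intro sum.cong refl suminf_mult expl_summable f)
  finally show "E t (\<lambda>\<mu> \<nu>. \<Sum>s\<in>S. c s * f s \<mu> \<nu>) \<mu> \<nu> = (\<Sum>s\<in>S. c s * E t (f s) \<mu> \<nu>)" .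
qed

lemma expl_lind: "supported N a \<Longrightarrow> E t (l a) = l (E t a)"
proof (intro ext)
  fix \<mu> \<nu>
  assume a: "supported N a"
  show "E t (l a) \<mu> \<nu> = l (E t a) \<mu> \<nu>"
  proof (cases "\<mu> \<in> L \<and> \<nu> \<in> L")
    case True
    have "l (E t a) \<mu> \<nu> = (\<Sum>\<kappa>\<in>L. \<Sum>\<rho>\<in>L. C \<mu> \<nu> \<kappa> \<rho> * E t a \<kappa> \<rho>)"
      using True by (simp add: lind_lincomb expl_supported a)
    also have "\<dots> = (\<Sum>\<kappa>\<in>L. \<Sum>\<rho>\<in>L. \<Sum>k. C \<mu> \<nu> \<kappa> \<rho> * (complex_of_real (t ^ k / fact k) * (l ^^ k) a \<kappa> \<rho>))"
      unfolding expl_def by (intro sum.cong refl suminf_mult[symmetric] expl_summable a)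
    also have "\<dots> = (\<Sum>\<kappa>\<in>L. \<Sum>k. \<Sum>\<rho>\<in>L. C \<mu> \<nu> \<kappa> \<rho> * (complex_of_real (t ^ k / fact k) * (l ^^ k) a \<kappa> \<rho>))"
      by (intro sum.cong refl suminf_sum[symmetric] summable_mult expl_summable a)
    also have "\<dots> = (\<Sum>k. \<Sum>\<kappa>\<in>L. \<Sum>\<rho>\<in>L. C \<mu> \<nu> \<kappa> \<rho> * (complex_of_real (t ^ k / fact k) * (l ^^ k) a \<kappa> \<rho>))"
      by (intro suminf_sum[symmetric] summable_sum summable_mult expl_summable a)
    also have "\<dots> = (\<Sum>k. complex_of_real (t ^ k / fact k) * (l ^^ k) (l a) \<mu> \<nu>)"
    proof (intro suminf_cong)
      fix k
      have "(l ^^ k) (l a) \<mu> \<nu> = l ((l ^^ k) a) \<mu> \<nu>"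
        by (simp add: funpow_swap1)
      also have "\<dots> = (\<Sum>\<kappa>\<in>L. \<Sum>\<rho>\<in>L. C \<mu> \<nu> \<kappa> \<rho> * (l ^^ k) a \<kappa> \<rho>)"
        using True by (simp add: lind_lincomb supp_pow a)
      finally show "(\<Sum>\<kappa>\<in>L. \<Sum>\<rho>\<in>L. C \<mu> \<nu> \<kappa> \<rho> * (complex_of_real (t ^ k / fact k) * (l ^^ k) a \<kappa> \<rho>))
          = complex_of_real (t ^ k / fact k) * (l ^^ k) (l a) \<mu> \<nu>"
        by (simp add: sum_distrib_left mult_ac)
    qed
    also have "\<dots> = E t (l a) \<mu> \<nu>" unfolding expl_def ..
    finally show ?thesis by simp
  next
    case False
    then show ?thesis using a
      by (simp add: supp_out expl_supported supported_lind)
  qed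
qed

lemma expl_deriv:
  assumes a: "supported N a"
  shows "((\<lambda>t. E t a \<mu> \<nu>) has_vector_derivative l (E t a) \<mu> \<nu>) (at t within S)"
proof -
  have d: "((\<lambda>z. \<Sum>k. cs a \<mu> \<nu> k * z ^ k) has_field_derivative (\<Sum>k. diffs (cs a \<mu> \<nu>) k * z ^ k)) (at z)" for z
    by (rule termdiffs_strong_converges_everywhere) (rule cs_summable[OF a])
  have "diffs (cs a \<mu> \<nu>) = cs (l a) \<mu> \<nu>"
  proof
    fix k
    show "diffs (cs a \<mu> \<nu>) k = cs (l a) \<mu> \<nu> k"
    proof -
      have nz: "(fact k :: complex) \<noteq> 0" by simp
      have s: "(of_nat (Suc k) :: complex) \<noteq> 0" by (simp del: of_nat_Suc)
      have e: "of_nat (Suc k) * (Y / fact (Suc k)) = Y / (fact k :: complex)" for Y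
        unfolding fact_Suc using s nz by (simp add: field_simps del: of_nat_Suc)
      show ?thesis unfolding diffs_def cs_def funpow_Suc_right comp_def of_nat_fact e ..
    qed
  qed
  then have "((\<lambda>t. E t a \<mu> \<nu>) has_vector_derivative E t (l a) \<mu> \<nu>) (at t within S)"
    unfolding expl_series using d[of "complex_of_real t"]
    by (auto intro: has_vector_derivative_real_field)
  then show ?thesis using expl_lind[OF a] by simp
qed

end

lemma nn_sym: "nn N \<mu> \<kappa> = nn N \<kappa> \<mu>"
  unfolding nn_def by (auto simp: power2_commute)

lemma ham_sym: "ham N v \<mu> \<kappa> = ham N v \<kappa> \<mu>"
  unfolding ham_def by (auto simp: nn_sym)

lemma ham_real: "cnj (ham N v \<mu> \<kappa>) = ham N v \<mu> \<kappa>"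
  unfolding ham_def by auto

lemma swap3: "(\<Sum>x\<in>A. \<Sum>y\<in>A. \<Sum>z\<in>A. F x y z) = (\<Sum>z\<in>A. \<Sum>y\<in>A. \<Sum>x\<in>A. F x y z)"
proof -
  have "(\<Sum>x\<in>A. \<Sum>y\<in>A. \<Sum>z\<in>A. F x y z) = (\<Sum>x\<in>A. \<Sum>z\<in>A. \<Sum>y\<in>A. F x y z)"
    by (rule sum.cong[OF refl]) (rule sum.swap)
  also have "\<dots> = (\<Sum>z\<in>A. \<Sum>x\<in>A. \<Sum>y\<in>A. F x y z)" by (rule sum.swap)
  also have "\<dots> = (\<Sum>z\<in>A. \<Sum>y\<in>A. \<Sum>x\<in>A. F x y z)"
    by (rule sum.cong[OF refl]) (rule sum.swap)
  finally show ?thesis .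
qed

lemma Im_zero_if_cnj: "cnj z = z \<Longrightarrow> Im z = 0"
  by (metis complex_cnj_cancel_iff Reals_cnj_iff complex_is_Real_iff)

context sysl begin

definition En :: "cmat \<Rightarrow> real" where
  "En a = (\<Sum>\<mu>\<in>L. \<Sum>\<nu>\<in>L. (cmod (a \<mu> \<nu>))\<^sup>2)"

lemma En_nonneg: "En a \<ge> 0" unfolding En_def by (intro sum_nonneg) auto

lemma entry_sq_le_En: "\<mu> \<in> L \<Longrightarrow> \<nu> \<in> L \<Longrightarrow> (cmod (a \<mu> \<nu>))\<^sup>2 \<le> En a"
proof -
  assume m: "\<mu> \<in> L" "\<nu> \<in> L"
  have "(cmod (a \<mu> \<nu>))\<^sup>2 \<le> (\<Sum>\<nu>\<in>L. (cmod (a \<mu> \<nu>))\<^sup>2)"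
    by (rule member_le_sum) (use m finite_lattice in auto)
  also have "\<dots> \<le> En a" unfolding En_def
    by (rule member_le_sum[where f="\<lambda>\<mu>. \<Sum>\<nu>\<in>L. (cmod (a \<mu> \<nu>))\<^sup>2"]) (use m finite_lattice in \<open>auto intro: sum_nonneg\<close>)
  finally show ?thesis .
qed

lemma En_zero: "supported N a \<Longrightarrow> En a = 0 \<Longrightarrow> a = (\<lambda>\<mu> \<nu>. 0)"
proof (intro ext)
  fix \<mu> \<nu> assume a: "supported N a" and e: "En a = 0"
  show "a \<mu> \<nu> = 0"
  proof (cases "\<mu> \<in> L \<and> \<nu> \<in> L")
    case True
    then have "(cmod (a \<mu> \<nu>))\<^sup>2 \<le> 0" using entry_sq_le_En[of \<mu> \<nu> a] e by simp
    then show ?thesis by simp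
  next
    case False then show ?thesis using a by (simp add: supp_out)
  qed
qed

lemma dco_nonneg: "zl \<ge> 0 \<Longrightarrow> zr \<ge> 0 \<Longrightarrow> \<beta> \<ge> 0 \<Longrightarrow> dco N zl zr \<beta> \<mu> \<nu> \<ge> 0"
  unfolding dco_def ind_def by auto

lemma diss:
  assumes a: "supported N a"
  shows "Re (\<Sum>\<mu>\<in>L. \<Sum>\<nu>\<in>L. cnj (a \<mu> \<nu>) * l a \<mu> \<nu>)
       = - (\<Sum>\<mu>\<in>L. \<Sum>\<nu>\<in>L. dco N zl zr \<beta> \<mu> \<nu> * (cmod (a \<mu> \<nu>))\<^sup>2)"
proof -
  let ?h = "ham N v"
  define X where "X = (\<Sum>\<mu>\<in>L. \<Sum>\<nu>\<in>L. cnj (a \<mu> \<nu>) * mmul N ?h a \<mu> \<nu>)"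
  define Y where "Y = (\<Sum>\<mu>\<in>L. \<Sum>\<nu>\<in>L. cnj (a \<mu> \<nu>) * mmul N a ?h \<mu> \<nu>)"
  have X3: "X = (\<Sum>\<mu>\<in>L. \<Sum>\<nu>\<in>L. \<Sum>\<kappa>\<in>L. cnj (a \<mu> \<nu>) * ?h \<mu> \<kappa> * a \<kappa> \<nu>)"
    unfolding X_def mmul_def by (simp add: sum_distrib_left mult.assoc)
  have "cnj X = (\<Sum>\<mu>\<in>L. \<Sum>\<nu>\<in>L. \<Sum>\<kappa>\<in>L. a \<mu> \<nu> * ?h \<mu> \<kappa> * cnj (a \<kappa> \<nu>))"
    unfolding X3 by (simp add: ham_real)
  also have "\<dots> = (\<Sum>\<kappa>\<in>L. \<Sum>\<nu>\<in>L. \<Sum>\<mu>\<in>L. cnj (a \<mu> \<nu>) * ?h \<mu> \<kappa> * a \<kappa> \<nu>)"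
    by (intro sum.cong refl) (simp add: ham_sym mult_ac)
  also have "\<dots> = X" unfolding X3 by (rule swap3[symmetric])
  finally have cX: "cnj X = X" .
  have Y3: "Y = (\<Sum>\<mu>\<in>L. \<Sum>\<nu>\<in>L. \<Sum>\<kappa>\<in>L. cnj (a \<mu> \<nu>) * a \<mu> \<kappa> * ?h \<kappa> \<nu>)"
    unfolding Y_def mmul_def by (simp add: sum_distrib_left mult.assoc)
  have "cnj Y = (\<Sum>\<mu>\<in>L. \<Sum>\<nu>\<in>L. \<Sum>\<kappa>\<in>L. a \<mu> \<nu> * cnj (a \<mu> \<kappa>) * ?h \<kappa> \<nu>)"
    unfolding Y3 by (simp add: ham_real)
  also have "\<dots> = (\<Sum>\<mu>\<in>L. \<Sum>\<kappa>\<in>L. \<Sum>\<nu>\<in>L. cnj (a \<mu> \<nu>) * a \<mu> \<kappa> * ?h \<kappa> \<nu>)"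
    by (intro sum.cong refl) (simp add: ham_sym mult_ac)
  also have "\<dots> = Y" unfolding Y3
    by (rule sum.cong[OF refl]) (rule sum.swap)
  finally have cY: "cnj Y = Y" .
  have "(\<Sum>\<mu>\<in>L. \<Sum>\<nu>\<in>L. cnj (a \<mu> \<nu>) * l a \<mu> \<nu>)
     = (\<Sum>\<mu>\<in>L. \<Sum>\<nu>\<in>L. - \<i> * (cnj (a \<mu> \<nu>) * mmul N ?h a \<mu> \<nu>) + \<i> * (cnj (a \<mu> \<nu>) * mmul N a ?h \<mu> \<nu>)
           - complex_of_real (dco N zl zr \<beta> \<mu> \<nu> * (cmod (a \<mu> \<nu>))\<^sup>2))"
  proof (intro sum.cong refl)
    fix \<mu> \<nu> assume m: "\<mu> \<in> L" "\<nu> \<in> L"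
    have c: "cnj (a \<mu> \<nu>) * a \<mu> \<nu> = complex_of_real ((cmod (a \<mu> \<nu>))\<^sup>2)"
      using complex_norm_square[of "a \<mu> \<nu>"] by (simp only: mult.commute)
    show "cnj (a \<mu> \<nu>) * l a \<mu> \<nu> = - \<i> * (cnj (a \<mu> \<nu>) * mmul N ?h a \<mu> \<nu>) + \<i> * (cnj (a \<mu> \<nu>) * mmul N a ?h \<mu> \<nu>)
           - complex_of_real (dco N zl zr \<beta> \<mu> \<nu> * (cmod (a \<mu> \<nu>))\<^sup>2)"
      unfolding lind_eq[OF a] using m c by (simp add: algebra_simps)
  qed
  also have "\<dots> = - \<i> * X + \<i> * Y - complex_of_real (\<Sum>\<mu>\<in>L. \<Sum>\<nu>\<in>L. dco N zl zr \<beta> \<mu> \<nu> * (cmod (a \<mu> \<nu>))\<^sup>2)"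
    unfolding X_def Y_def by (simp add: sum.distrib sum_subtractf sum_distrib_left sum_negf)
  finally show ?thesis using Im_zero_if_cnj[OF cX] Im_zero_if_cnj[OF cY] by simp
qed

definition sol :: "(real \<Rightarrow> cmat) \<Rightarrow> bool" where
  "sol x \<longleftrightarrow> (\<forall>t. supported N (x t)) \<and>
     (\<forall>t \<mu> \<nu>. ((\<lambda>s. x s \<mu> \<nu>) has_vector_derivative l (x t) \<mu> \<nu>) (at t))"

lemma sol_expl: "supported N a \<Longrightarrow> sol (\<lambda>t. E t a)"
  unfolding sol_def by (auto simp: expl_supported expl_deriv)

lemma sol_shift: "sol x \<Longrightarrow> sol (\<lambda>t. x (t + s))"
  unfolding sol_def
proof (intro conjI allI)
  fix t \<mu> \<nu>
  assume x: "(\<forall>t. supported N (x t)) \<and> (\<forall>t \<mu> \<nu>. ((\<lambda>s. x s \<mu> \<nu>) has_vector_derivative l (x t) \<mu> \<nu>) (at t))"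
  have "(((\<lambda>s. x s \<mu> \<nu>) \<circ> (\<lambda>t. t + s)) has_vector_derivative (1 *\<^sub>R l (x (t + s)) \<mu> \<nu>)) (at t)"
    by (rule vector_diff_chain_at) (auto intro!: derivative_eq_intros x[THEN conjunct2, rule_format])
  then show "((\<lambda>r. x (r + s) \<mu> \<nu>) has_vector_derivative l (x (t + s)) \<mu> \<nu>) (at t)"
    by (simp add: comp_def)
next
  fix t
  assume x: "(\<forall>t. supported N (x t)) \<and> (\<forall>t \<mu> \<nu>. ((\<lambda>s. x s \<mu> \<nu>) has_vector_derivative l (x t) \<mu> \<nu>) (at t))"
  then show "supported N (x (t + s))" by blast
qed

lemma lind_diff:
  assumes a: "supported N a" and b: "supported N b"
  shows "l (\<lambda>\<mu> \<nu>. a \<mu> \<nu> - b \<mu> \<nu>) = (\<lambda>\<mu> \<nu>. l a \<mu> \<nu> - l b \<mu> \<nu>)"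
proof -
  have "l (\<lambda>\<mu> \<nu>. \<Sum>s\<in>{True, False}. (if s then 1 else -1) * (if s then a else b) \<mu> \<nu>)
     = (\<lambda>\<mu> \<nu>. \<Sum>s\<in>{True, False}. (if s then 1 else -1) * l (if s then a else b) \<mu> \<nu>)"
    by (rule lind_sum) (use a b in auto)
  then show ?thesis by simp
qed

lemma sol_diff: "sol x \<Longrightarrow> sol y \<Longrightarrow> sol (\<lambda>t \<mu> \<nu>. x t \<mu> \<nu> - y t \<mu> \<nu>)"
  unfolding sol_def
  by (auto simp: lind_diff supported_def intro!: derivative_eq_intros)

lemma En_deriv:
  assumes x: "sol x"
  shows "((\<lambda>t. En (x t)) has_real_derivative
     (2 * Re (\<Sum>\<mu>\<in>L. \<Sum>\<nu>\<in>L. cnj (x t \<mu> \<nu>) * l (x t) \<mu> \<nu>))) (at t)"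
proof -
  have d: "((\<lambda>s. x s \<mu> \<nu>) has_vector_derivative l (x t) \<mu> \<nu>) (at t)" for \<mu> \<nu>
    using x unfolding sol_def by blast
  have e: "(\<lambda>t. En (x t)) = (\<lambda>t. \<Sum>\<mu>\<in>L. \<Sum>\<nu>\<in>L. (Re (x t \<mu> \<nu>))\<^sup>2 + (Im (x t \<mu> \<nu>))\<^sup>2)"
    unfolding En_def cmod_power2 ..
  have "((\<lambda>t. \<Sum>\<mu>\<in>L. \<Sum>\<nu>\<in>L. (Re (x t \<mu> \<nu>))\<^sup>2 + (Im (x t \<mu> \<nu>))\<^sup>2) has_real_derivative
     (\<Sum>\<mu>\<in>L. \<Sum>\<nu>\<in>L. 2 * Re (x t \<mu> \<nu>) * Re (l (x t) \<mu> \<nu>) + 2 * Im (x t \<mu> \<nu>) * Im (l (x t) \<mu> \<nu>))) (at t)"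
    by (intro DERIV_sum derivative_eq_intros has_field_derivative_Re has_field_derivative_Im d) (auto intro: d)
  moreover have "(\<Sum>\<mu>\<in>L. \<Sum>\<nu>\<in>L. 2 * Re (x t \<mu> \<nu>) * Re (l (x t) \<mu> \<nu>) + 2 * Im (x t \<mu> \<nu>) * Im (l (x t) \<mu> \<nu>))
     = 2 * Re (\<Sum>\<mu>\<in>L. \<Sum>\<nu>\<in>L. cnj (x t \<mu> \<nu>) * l (x t) \<mu> \<nu>)"
    by (simp add: Re_sum sum_distrib_left algebra_simps)
  ultimately show ?thesis unfolding e by simp
qed

end

locale sys = sysl +
  assumes Nne: "N \<noteq> []" and N1: "\<forall>i<length N. 1 \<le> N!i" and N2: "2 \<le> N!0"
    and zl: "zl > 0" and zr: "zr > 0" and bt: "\<beta> \<ge> 0"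
begin

lemma diss_nonpos: "supported N a \<Longrightarrow> Re (\<Sum>\<mu>\<in>L. \<Sum>\<nu>\<in>L. cnj (a \<mu> \<nu>) * l a \<mu> \<nu>) \<le> 0"
  unfolding diss using zl zr bt dco_nonneg by (auto intro!: sum_nonneg)

lemma En_mono: assumes x: "sol x" and st: "s \<le> t" shows "En (x t) \<le> En (x s)"
proof -
  have "\<exists>y. ((\<lambda>t. En (x t)) has_real_derivative y) (at r) \<and> y \<le> 0" for r
    using En_deriv[OF x, of r] diss_nonpos[of "x r"] x unfolding sol_def by auto
  then show ?thesis using DERIV_nonpos_imp_nonincreasing[OF st, of "\<lambda>t. En (x t)"] by blast
qed

lemma sol_unique:
  assumes x: "sol x" and y: "sol y" and e: "x t0 = y t0" and t: "t0 \<le> t"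
  shows "x t = y t"
proof -
  let ?d = "\<lambda>t \<mu> \<nu>. x t \<mu> \<nu> - y t \<mu> \<nu>"
  have d: "sol ?d" by (rule sol_diff[OF x y])
  have "En (?d t) \<le> En (?d t0)" by (rule En_mono[OF d t])
  also have "En (?d t0) = 0" using e by (simp add: En_def)
  finally have "En (?d t) = 0" using En_nonneg[of "?d t"] by linarith
  then have "?d t = (\<lambda>\<mu> \<nu>. 0)" using d unfolding sol_def by (intro En_zero) auto
  then show ?thesis by (intro ext) (metis eq_iff_diff_eq_0)
qed

lemma semigroup: "supported N a \<Longrightarrow> 0 \<le> t \<Longrightarrow> E (t + s) a = E t (E s a)"
  using sol_unique[OF sol_shift[OF sol_expl, of a s] sol_expl[OF expl_supported, of a s], of 0 t]
  by (simp add: expl_zero)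

lemma const_sol: "supported N a \<Longrightarrow> l a = (\<lambda>\<mu> \<nu>. 0) \<Longrightarrow> 0 \<le> t \<Longrightarrow> E t a = a"
proof -
  assume a: "supported N a" and z: "l a = (\<lambda>\<mu> \<nu>. 0)" and t: "0 \<le> t"
  have "sol (\<lambda>t. a)" unfolding sol_def using a z by simp
  from sol_unique[OF sol_expl[OF a] this, of 0 t] t show ?thesis by (simp add: expl_zero)
qed

end

lemma latt0: "N \<noteq> [] \<Longrightarrow> \<mu> \<in> lattice N \<Longrightarrow> 1 \<le> \<mu>!0 \<and> \<mu>!0 \<le> N!0"
  unfolding lattice_def by auto

lemma splus_latt: "N \<noteq> [] \<Longrightarrow> \<mu> \<in> lattice N \<Longrightarrow> \<mu>!0 < N!0 \<Longrightarrow> splus \<mu> \<in> lattice N"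
  unfolding lattice_def splus_def by (auto simp: nth_list_update)

lemma splus_0: "\<mu> \<noteq> [] \<Longrightarrow> splus \<mu> ! 0 = \<mu>!0 + 1"
  unfolding splus_def by simp

lemma nn_splus:
  assumes N: "N \<noteq> []" and m: "\<mu> \<in> lattice N" and lt: "\<mu>!0 < N!0"
  shows "nn N \<mu> (splus \<mu>)"
proof -
  have len: "length \<mu> = length N" using m unfolding lattice_def by auto
  have "(\<Sum>i<length N. (int (\<mu>!i) - int (splus \<mu>!i))^2) = (\<Sum>i<length N. if i = 0 then 1 else 0)"
    by (intro sum.cong refl) (auto simp: splus_def nth_list_update len)
  also have "\<dots> = 1" using N by (simp add: sum.delta)
  finally show ?thesis unfolding nn_def using m splus_latt[OF N m lt] by simp
qed

lemma nn_up:
  assumes N: "N \<noteq> []" and m: "\<mu> \<in> lattice N" and k: "\<kappa> \<in> lattice N"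
    and n: "nn N \<mu> \<kappa>" and gt: "\<kappa>!0 > \<mu>!0"
  shows "\<kappa> = splus \<mu>"
proof -
  define f where "f i = (int (\<mu>!i) - int (\<kappa>!i))^2" for i
  have s: "(\<Sum>i<length N. f i) = 1" using n unfolding nn_def f_def by simp
  have fn: "\<And>i. f i \<ge> 0" unfolding f_def by simp
  have z: "0 \<in> {..<length N}" using N by simp
  have "(\<Sum>i<length N. f i) = f 0 + (\<Sum>i\<in>{..<length N} - {0}. f i)"
    by (rule sum.remove[OF _ z]) simp
  then have s2: "f 0 + (\<Sum>i\<in>{..<length N} - {0}. f i) = 1" using s by simp
  have r0: "(\<Sum>i\<in>{..<length N} - {0}. f i) \<ge> 0" by (intro sum_nonneg fn)
  have "int (\<kappa>!0) - int (\<mu>!0) \<ge> 1" using gt by simp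
  then have "(int (\<kappa>!0) - int (\<mu>!0))^2 \<ge> 1" by (rule one_le_power)
  then have f0: "f 0 \<ge> 1" unfolding f_def by (simp add: power2_commute)
  then have "(\<Sum>i\<in>{..<length N} - {0}. f i) = 0" using s2 r0 by linarith
  then have fz: "\<And>i. i \<in> {..<length N} - {0} \<Longrightarrow> f i = 0"
    using sum_nonneg_eq_0_iff[of "{..<length N} - {0}" f] fn by auto
  have "f 0 = 1" using s2 f0 r0 fz by (simp add: \<open>(\<Sum>i\<in>{..<length N} - {0}. f i) = 0\<close>)
  then have "(int (\<kappa>!0) - int (\<mu>!0))^2 = 1" unfolding f_def by (simp add: power2_commute)
  then have "int (\<kappa>!0) - int (\<mu>!0) = 1 \<or> int (\<kappa>!0) - int (\<mu>!0) = -1"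
    by (simp add: power2_eq_1_iff)
  then have k0: "\<kappa>!0 = \<mu>!0 + 1" using gt by linarith
  have lm: "length \<mu> = length N" "length \<kappa> = length N" using m k unfolding lattice_def by auto
  show ?thesis
  proof (rule nth_equalityI)
    show "length \<kappa> = length (splus \<mu>)" using lm by (simp add: splus_def)
  next
    fix i assume i: "i < length \<kappa>"
    show "\<kappa>!i = splus \<mu> ! i"
    proof (cases "i = 0")
      case True then show ?thesis using k0 i lm by (simp add: splus_def nth_list_update)
    next
      case False
      then have "f i = 0" using fz i lm by auto
      then show ?thesis using False i lm unfolding f_def by (simp add: splus_def nth_list_update)
    qed
  qed
qed

lemma down_mem:
  assumes N: "N \<noteq> []" and m: "\<mu> \<in> lattice N" and j: "\<mu>!0 = Suc j" and j1: "j \<ge> 1"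
  shows "\<mu>[0 := j] \<in> lattice N" "splus (\<mu>[0 := j]) = \<mu>" "\<mu>[0 := j] ! 0 = j"
proof -
  have lm: "length \<mu> = length N" using m unfolding lattice_def by auto
  show "\<mu>[0 := j] \<in> lattice N" using m j j1 N lm unfolding lattice_def
    by (auto simp: nth_list_update)
  have "\<mu>[0 := Suc j] = \<mu>" using j by (metis list_update_id)
  then show "splus (\<mu>[0 := j]) = \<mu>" unfolding splus_def using j N lm
    by simp
  show "\<mu>[0 := j] ! 0 = j" using N lm by simp
qed

context sys begin

lemma ham_nn_splus: "\<mu> \<in> L \<Longrightarrow> \<mu>!0 < N!0 \<Longrightarrow> ham N v \<mu> (splus \<mu>) = -1"
proof -
  assume m: "\<mu> \<in> L" and lt: "\<mu>!0 < N!0"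
  have ne: "splus \<mu> \<noteq> \<mu>"
  proof
    assume "splus \<mu> = \<mu>"
    then have "splus \<mu> ! 0 = \<mu> ! 0" by simp
    moreover have "\<mu> \<noteq> []" using m Nne unfolding lattice_def by auto
    ultimately show False by (simp add: splus_0)
  qed
  show ?thesis unfolding ham_def using m splus_latt[OF Nne m lt] nn_splus[OF Nne m lt] ne by simp
qed

lemma row_sum:
  assumes m: "\<mu> \<in> L" and lt: "\<mu>!0 < N!0"
    and z: "\<And>\<kappa>. \<kappa> \<in> L \<Longrightarrow> \<kappa>!0 \<le> \<mu>!0 \<Longrightarrow> b \<kappa> \<nu> = 0"
  shows "(\<Sum>\<kappa>\<in>L. ham N v \<mu> \<kappa> * b \<kappa> \<nu>) = - b (splus \<mu>) \<nu>"
proof -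
  have sp: "splus \<mu> \<in> L" by (rule splus_latt[OF Nne m lt])
  have "(\<Sum>\<kappa>\<in>L. ham N v \<mu> \<kappa> * b \<kappa> \<nu>)
     = ham N v \<mu> (splus \<mu>) * b (splus \<mu>) \<nu> + (\<Sum>\<kappa>\<in>L - {splus \<mu>}. ham N v \<mu> \<kappa> * b \<kappa> \<nu>)"
    by (rule sum.remove[OF finite_lattice sp])
  also have "(\<Sum>\<kappa>\<in>L - {splus \<mu>}. ham N v \<mu> \<kappa> * b \<kappa> \<nu>) = 0"
  proof (intro sum.neutral ballI)
    fix \<kappa> assume k: "\<kappa> \<in> L - {splus \<mu>}"
    show "ham N v \<mu> \<kappa> * b \<kappa> \<nu> = 0"
    proof (cases "\<kappa>!0 \<le> \<mu>!0")
      case True then show ?thesis using z k by simp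
    next
      case False
      then have "\<not> nn N \<mu> \<kappa>" using nn_up[OF Nne m, of \<kappa>] k by auto
      moreover have "\<kappa> \<noteq> \<mu>" using False by auto
      ultimately show ?thesis unfolding ham_def by simp
    qed
  qed
  finally show ?thesis using ham_nn_splus[OF m lt] by simp
qed

lemma const_deriv_zero:
  assumes d: "((\<lambda>r. f r) has_vector_derivative f') (at s)" and s: "s > 0"
    and c: "\<And>r. r > 0 \<Longrightarrow> f r = (k :: 'a :: real_normed_vector)"
  shows "f' = 0"
proof -
  have "((\<lambda>r. k) has_vector_derivative 0) (at s)" by simp
  then have "((\<lambda>r. f r) has_vector_derivative 0) (at s)"
    by (rule has_vector_derivative_transform_within_open[of _ _ _ "{0<..}"]) (use s c in auto)
  then show ?thesis using vector_derivative_unique_at d by blast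
qed

lemma kernel:
  assumes y: "supported N y" and c: "\<And>s. s \<ge> 0 \<Longrightarrow> En (E s y) = c"
  shows "y = (\<lambda>\<mu> \<nu>. 0)"
proof -
  have sp: "\<And>s. supported N (E s y)" by (rule expl_supported[OF y])
  have d0: "E s y \<mu> \<nu> = 0" if s: "s > 0" and m: "\<mu> \<in> slice N 1" for s \<mu> \<nu>
  proof -
    have D1: "((\<lambda>t. En (E t y)) has_real_derivative
        (2 * Re (\<Sum>\<mu>\<in>L. \<Sum>\<nu>\<in>L. cnj (E s y \<mu> \<nu>) * l (E s y) \<mu> \<nu>))) (at s)"
      by (rule En_deriv[OF sol_expl[OF y]])
    have "((\<lambda>t. c) has_real_derivative 0) (at s)" by simp
    then have D2: "((\<lambda>t. En (E t y)) has_real_derivative 0) (at s)"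
      by (rule has_field_derivative_transform_within_open[of _ _ _ "{0<..}"]) (use s c in auto)
    have "Re (\<Sum>\<mu>\<in>L. \<Sum>\<nu>\<in>L. cnj (E s y \<mu> \<nu>) * l (E s y) \<mu> \<nu>) = 0"
      using DERIV_unique[OF D1 D2] by simp
    then have S0: "(\<Sum>\<mu>\<in>L. \<Sum>\<nu>\<in>L. dco N zl zr \<beta> \<mu> \<nu> * (cmod (E s y \<mu> \<nu>))\<^sup>2) = 0"
      unfolding diss[OF sp] by simp
    have nn: "\<And>\<mu> \<nu>. dco N zl zr \<beta> \<mu> \<nu> * (cmod (E s y \<mu> \<nu>))\<^sup>2 \<ge> 0"
      using dco_nonneg[OF less_imp_le[OF zl] less_imp_le[OF zr] bt] by (intro mult_nonneg_nonneg) auto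
    show ?thesis
    proof (cases "\<nu> \<in> L")
      case True
      have mL: "\<mu> \<in> L" using m slice_sub by blast
      have S1: "(\<Sum>\<nu>\<in>L. dco N zl zr \<beta> \<mu> \<nu> * (cmod (E s y \<mu> \<nu>))\<^sup>2) = 0"
        by (rule sum_nonneg_0[OF finite_lattice _ S0 mL]) (intro sum_nonneg nn)
      have t0: "dco N zl zr \<beta> \<mu> \<nu> * (cmod (E s y \<mu> \<nu>))\<^sup>2 = 0"
        by (rule sum_nonneg_0[OF finite_lattice _ S1 True]) (rule nn)
      have "dco N zl zr \<beta> \<mu> \<nu> \<ge> zl" using m zl zr bt unfolding dco_def ind_def by auto
      then have "dco N zl zr \<beta> \<mu> \<nu> > 0" using zl by linarith
      then show ?thesis using t0 by simp
    next
      case False then show ?thesis using sp by (simp add: supp_out)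
    qed
  qed
  have rows: "\<forall>s>0. \<forall>\<mu>\<in>L. \<mu>!0 \<le> j \<longrightarrow> (\<forall>\<nu>. E s y \<mu> \<nu> = 0)" for j
  proof (induction j)
    case 0 then show ?case using latt0[OF Nne] by fastforce
  next
    case (Suc j)
    show ?case
    proof (intro allI impI ballI)
      fix s :: real and \<mu> \<nu> assume s: "s > 0" and m: "\<mu> \<in> L" and le: "\<mu>!0 \<le> Suc j"
      show "E s y \<mu> \<nu> = 0"
      proof (cases "\<mu>!0 \<le> j")
        case True then show ?thesis using Suc.IH s m by blast
      next
        case False
        then have eq: "\<mu>!0 = Suc j" using le by simp
        show ?thesis
        proof (cases "j = 0")
          case True then show ?thesis using d0[OF s] m eq unfolding slice_def by simp
        next
          case False
          then have j1: "j \<ge> 1" by simp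
          define \<mu>0 where "\<mu>0 = \<mu>[0 := j]"
          have m0: "\<mu>0 \<in> L" "splus \<mu>0 = \<mu>" "\<mu>0!0 = j"
            using down_mem[OF Nne m eq j1] unfolding \<mu>0_def by auto
          have lt: "\<mu>0!0 < N!0" using m0 latt0[OF Nne m] eq by simp
          have z0: "\<And>r \<nu>'. r > 0 \<Longrightarrow> E r y \<mu>0 \<nu>' = 0" using Suc.IH m0 by auto
          have "l (E s y) \<mu>0 \<nu> = 0"
            by (rule const_deriv_zero[OF expl_deriv[OF y] s]) (rule z0)
          moreover have "l (E s y) \<mu>0 \<nu> = \<i> * (E s y \<mu> \<nu>)"
          proof (cases "\<nu> \<in> L")
            case True
            have r1: "mmul N (ham N v) (E s y) \<mu>0 \<nu> = - E s y \<mu> \<nu>"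
              unfolding mmul_def using row_sum[OF m0(1) lt, of "E s y" \<nu>] Suc.IH s m0 by auto
            have r2: "mmul N (E s y) (ham N v) \<mu>0 \<nu> = 0"
              unfolding mmul_def using z0[OF s] by simp
            show ?thesis unfolding lind_eq[OF sp] using True m0 r1 r2 z0[OF s] by simp
          next
            case False
            have "l (E s y) \<mu>0 \<nu> = 0" by (rule supp_out[OF supported_lind[OF sp]]) (use False in simp)
            moreover have "E s y \<mu> \<nu> = 0" by (rule supp_out[OF sp]) (use False in simp)
            ultimately show ?thesis by simp
          qed
          ultimately show ?thesis by simp
        qed
      qed
    qed
  qed
  have allz: "E s y \<mu> \<nu> = 0" if s: "s > 0" for s \<mu> \<nu>
  proof (cases "\<mu> \<in> L")
    case True then show ?thesis using rows[of "N!0"] s latt0[OF Nne True] by blast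
  next
    case False then show ?thesis using sp by (simp add: supp_out)
  qed
  show ?thesis
  proof (intro ext)
    fix \<mu> \<nu>
    have "continuous (at 0 within {0<..}) (\<lambda>s. E s y \<mu> \<nu>)"
      by (rule has_vector_derivative_continuous[OF expl_deriv[OF y]])
    then have "((\<lambda>s. E s y \<mu> \<nu>) \<longlongrightarrow> E 0 y \<mu> \<nu>) (at_right 0)"
      by (simp add: continuous_within)
    moreover have "((\<lambda>s. E s y \<mu> \<nu>) \<longlongrightarrow> 0) (at_right 0)"
    proof (rule tendsto_eventually)
      show "\<forall>\<^sub>F s in at_right 0. E s y \<mu> \<nu> = 0"
        by (rule eventually_at_rightI[of 0 1]) (auto intro: allz)
    qed
    ultimately have "E 0 y \<mu> \<nu> = 0" by (rule tendsto_unique[rotated]) simp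
    then show "y \<mu> \<nu> = 0" by (simp add: expl_zero)
  qed
qed

end

definition eu :: "site \<Rightarrow> site \<Rightarrow> cmat" where
  "eu \<kappa> \<rho> = (\<lambda>\<mu> \<nu>. if \<mu> = \<kappa> \<and> \<nu> = \<rho> then 1 else 0)"

lemma bw_finite:
  fixes f :: "nat \<Rightarrow> 'i \<Rightarrow> complex"
  assumes I: "finite I" and b: "\<And>n i. i \<in> I \<Longrightarrow> cmod (f n i) \<le> B"
  shows "\<exists>r. strict_mono r \<and> (\<forall>i\<in>I. \<exists>y. (\<lambda>k. f (r k) i) \<longlonglongrightarrow> y)"
  using I b
proof (induction I rule: finite_induct)
  case empty
  show ?case by (rule exI[of _ id]) (simp add: strict_mono_def)
next
  case (insert i I)
  obtain r where r: "strict_mono r" "\<forall>i\<in>I. \<exists>y. (\<lambda>k. f (r k) i) \<longlonglongrightarrow> y"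
    using insert by auto
  have "bounded (range (\<lambda>k. f (r k) i))"
    unfolding bounded_iff using insert.prems by auto
  then obtain y r' where r': "strict_mono r'" "((\<lambda>k. f (r k) i) \<circ> r') \<longlonglongrightarrow> y"
    using bounded_imp_convergent_subsequence by blast
  show ?case
  proof (rule exI[of _ "r \<circ> r'"], intro conjI ballI)
    show "strict_mono (r \<circ> r')" using r(1) r'(1) by (rule strict_mono_o)
    fix j assume j: "j \<in> insert i I"
    show "\<exists>y. (\<lambda>k. f ((r \<circ> r') k) j) \<longlonglongrightarrow> y"
    proof (cases "j = i")
      case True then show ?thesis using r'(2) by (auto simp: comp_def)
    next
      case False
      then obtain z where "(\<lambda>k. f (r k) j) \<longlonglongrightarrow> z" using j r(2) by auto
      then have "((\<lambda>k. f (r k) j) \<circ> r') \<longlonglongrightarrow> z" by (rule LIMSEQ_subseq_LIMSEQ[OF _ r'(1)])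
      then show ?thesis by (auto simp: comp_def)
    qed
  qed
qed

context sys begin

lemma supported_eu: "\<kappa> \<in> L \<Longrightarrow> \<rho> \<in> L \<Longrightarrow> supported N (eu \<kappa> \<rho>)"
  unfolding supported_def eu_def by auto

lemma decomp:
  assumes b: "supported N b"
  shows "b = (\<lambda>\<mu> \<nu>. \<Sum>p\<in>L \<times> L. b (fst p) (snd p) * eu (fst p) (snd p) \<mu> \<nu>)"
proof (intro ext)
  fix \<mu> \<nu>
  have "(\<Sum>p\<in>L \<times> L. b (fst p) (snd p) * eu (fst p) (snd p) \<mu> \<nu>)
      = (\<Sum>p\<in>L \<times> L. if p = (\<mu>, \<nu>) then b \<mu> \<nu> else 0)"
    unfolding eu_def by (intro sum.cong refl) auto
  also have "\<dots> = (if (\<mu>, \<nu>) \<in> L \<times> L then b \<mu> \<nu> else 0)"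
    by (rule sum_if_eq) (simp add: finite_lattice)
  also have "\<dots> = b \<mu> \<nu>" using b by (auto simp: supp_out)
  finally show "b \<mu> \<nu> = (\<Sum>p\<in>L \<times> L. b (fst p) (snd p) * eu (fst p) (snd p) \<mu> \<nu>)" by simp
qed

lemma expl_rep:
  assumes b: "supported N b"
  shows "E t b \<mu> \<nu> = (\<Sum>p\<in>L \<times> L. b (fst p) (snd p) * E t (eu (fst p) (snd p)) \<mu> \<nu>)"
proof -
  have "E t b = E t (\<lambda>\<mu> \<nu>. \<Sum>p\<in>L \<times> L. b (fst p) (snd p) * eu (fst p) (snd p) \<mu> \<nu>)"
    using decomp[OF b] by simp
  also have "\<dots> = (\<lambda>\<mu> \<nu>. \<Sum>p\<in>L \<times> L. b (fst p) (snd p) * E t (eu (fst p) (snd p)) \<mu> \<nu>)"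
    by (rule expl_sum) (auto simp: finite_lattice supported_eu)
  finally show ?thesis by simp
qed

lemma expl_cont_seq:
  assumes bk: "\<And>k. supported N (b k)" and y: "supported N y"
    and c: "\<And>\<mu> \<nu>. \<mu> \<in> L \<Longrightarrow> \<nu> \<in> L \<Longrightarrow> (\<lambda>k. b k \<mu> \<nu>) \<longlonglongrightarrow> y \<mu> \<nu>"
  shows "(\<lambda>k. E t (b k) \<mu> \<nu>) \<longlonglongrightarrow> E t y \<mu> \<nu>"
  unfolding expl_rep[OF bk] expl_rep[OF y]
  by (intro tendsto_sum tendsto_mult tendsto_const) (auto intro: c)

lemma En_cont_seq:
  assumes c: "\<And>\<mu> \<nu>. \<mu> \<in> L \<Longrightarrow> \<nu> \<in> L \<Longrightarrow> (\<lambda>k. b k \<mu> \<nu>) \<longlonglongrightarrow> y \<mu> \<nu>"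
  shows "(\<lambda>k. En (b k)) \<longlonglongrightarrow> En y"
  unfolding En_def by (intro tendsto_sum tendsto_power tendsto_norm) (auto intro: c)

lemma entry_le_sqrtEn: "\<mu> \<in> L \<Longrightarrow> \<nu> \<in> L \<Longrightarrow> cmod (a \<mu> \<nu>) \<le> sqrt (En a)"
  using entry_sq_le_En real_le_rsqrt by blast

lemma decay_En:
  assumes a: "supported N a"
  shows "((\<lambda>t. En (E t a)) \<longlongrightarrow> 0) at_top"
proof -
  let ?x = "\<lambda>t. E t a"
  have sx: "sol ?x" by (rule sol_expl[OF a])
  define g where "g n = En (?x (real n))" for n
  have dg: "decseq g" unfolding g_def decseq_def
    by (intro allI impI En_mono[OF sx]) simp
  obtain c where gc: "g \<longlonglongrightarrow> c" and cle: "\<forall>i. c \<le> g i"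
    using decseq_convergent[OF dg, of 0] En_nonneg unfolding g_def by blast
  have lower: "c \<le> En (?x t)" for t
  proof -
    have "t \<le> real (nat \<lceil>t\<rceil>)" by linarith
    then have "En (?x (real (nat \<lceil>t\<rceil>))) \<le> En (?x t)" by (rule En_mono[OF sx])
    then show ?thesis using cle unfolding g_def by (metis order.trans)
  qed
  have bnd: "cmod (?x (real n) \<mu> \<nu>) \<le> sqrt (En a)" if "(\<mu>, \<nu>) \<in> L \<times> L" for n \<mu> \<nu>
  proof -
    have "cmod (?x (real n) \<mu> \<nu>) \<le> sqrt (En (?x (real n)))"
      using that entry_le_sqrtEn by auto
    also have "En (?x (real n)) \<le> En (?x 0)" by (rule En_mono[OF sx]) simp
    then have "sqrt (En (?x (real n))) \<le> sqrt (En a)" by (simp add: expl_zero)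
    finally show ?thesis .
  qed
  obtain r where r: "strict_mono r"
    and cv: "\<forall>p\<in>L \<times> L. \<exists>y. (\<lambda>k. ?x (real (r k)) (fst p) (snd p)) \<longlonglongrightarrow> y"
    using bw_finite[of "L \<times> L" "\<lambda>n p. ?x (real n) (fst p) (snd p)" "sqrt (En a)"] bnd
    by (auto simp: finite_lattice)
  obtain Y where Y: "\<forall>p\<in>L \<times> L. (\<lambda>k. ?x (real (r k)) (fst p) (snd p)) \<longlonglongrightarrow> Y p"
    using bchoice[OF cv] by blast
  define y where "y \<mu> \<nu> = (if \<mu> \<in> L \<and> \<nu> \<in> L then Y (\<mu>, \<nu>) else 0)" for \<mu> \<nu>
  have sy: "supported N y" unfolding supported_def y_def by auto
  have conv: "(\<lambda>k. ?x (real (r k)) \<mu> \<nu>) \<longlonglongrightarrow> y \<mu> \<nu>" if "\<mu> \<in> L" "\<nu> \<in> L" for \<mu> \<nu>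
    using Y that unfolding y_def by auto
  have gr: "(\<lambda>k. g (r k)) \<longlonglongrightarrow> c" using LIMSEQ_subseq_LIMSEQ[OF gc r] by (simp add: comp_def)
  have "(\<lambda>k. g (r k)) \<longlonglongrightarrow> En y" unfolding g_def by (rule En_cont_seq[OF conv])
  then have Eyc: "En y = c" using gr LIMSEQ_unique by blast
  have "En (E s y) = c" if s: "s \<ge> 0" for s
  proof -
    have sh: "E s (?x (real (r k))) = ?x (s + real (r k))" for k
      by (rule semigroup[OF a s, symmetric])
    have l1: "(\<lambda>k. En (E s (?x (real (r k))))) \<longlonglongrightarrow> En (E s y)"
      by (intro En_cont_seq expl_cont_seq expl_supported a sy conv)
    have "(\<lambda>k. En (?x (s + real (r k)))) \<longlonglongrightarrow> c"
    proof (rule tendsto_sandwich[OF _ _ tendsto_const gr])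
      show "\<forall>\<^sub>F k in sequentially. c \<le> En (?x (s + real (r k)))" using lower by simp
      show "\<forall>\<^sub>F k in sequentially. En (?x (s + real (r k))) \<le> g (r k)"
        unfolding g_def using s by (intro always_eventually allI En_mono[OF sx]) simp
    qed
    then show ?thesis using l1 unfolding sh using LIMSEQ_unique by blast
  qed
  then have "y = (\<lambda>\<mu> \<nu>. 0)" by (intro kernel[OF sy]) auto
  then have c0: "c = 0" using Eyc by (simp add: En_def)
  show ?thesis
  proof (rule order_tendstoI)
    fix e :: real assume "e < 0"
    then show "\<forall>\<^sub>F t in at_top. e < En (?x t)" using En_nonneg
      by (intro always_eventually allI) (metis less_le_trans)
  next
    fix e :: real assume e: "0 < e"
    obtain n0 where n0: "g n0 < e" using order_tendstoD(2)[OF gc[unfolded c0] e]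
      by (metis eventually_sequentially order.refl)
    show "\<forall>\<^sub>F t in at_top. En (?x t) < e"
      unfolding eventually_at_top_linorder
      by (rule exI[of _ "real n0"]) (use n0 in \<open>auto simp: g_def intro: le_less_trans En_mono[OF sx]\<close>)
  qed
qed

end

lemma atLeast_lebesgue: "{a::real..} \<in> sets lebesgue"
  by simp

context sys begin

lemma entries_decay:
  assumes a: "supported N a"
  shows "((\<lambda>t. E t a \<mu> \<nu>) \<longlongrightarrow> 0) at_top"
proof (cases "\<mu> \<in> L \<and> \<nu> \<in> L")
  case True
  have "((\<lambda>t. sqrt (En (E t a))) \<longlongrightarrow> 0) at_top"
    using tendsto_real_sqrt[OF decay_En[OF a]] by simp
  then show ?thesis
    by (rule Lim_null_comparison[rotated]) (use True entry_le_sqrtEn in auto)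
next
  case False
  then show ?thesis using expl_supported[OF a] by (simp add: supp_out)
qed

lemma contract:
  "\<exists>T>0. \<forall>b. supported N b \<longrightarrow> En (E T b) \<le> En b / 4"
proof -
  define G where "G t p \<mu> \<nu> = E t (eu (fst p) (snd p)) \<mu> \<nu>" for t p \<mu> \<nu>
  define \<Psi> where "\<Psi> t = (\<Sum>\<mu>\<in>L. \<Sum>\<nu>\<in>L. (\<Sum>p\<in>L \<times> L. cmod (G t p \<mu> \<nu>))\<^sup>2)" for t
  have "(\<Psi> \<longlongrightarrow> 0) at_top"
  proof -
    have "(\<Psi> \<longlongrightarrow> (\<Sum>\<mu>\<in>L. \<Sum>\<nu>\<in>L. (\<Sum>p\<in>L \<times> L. cmod 0)\<^sup>2)) at_top"
      unfolding \<Psi>_def G_def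
      by (intro tendsto_sum tendsto_power tendsto_norm entries_decay supported_eu) auto
    then show ?thesis by simp
  qed
  then have "\<forall>\<^sub>F t in at_top. \<Psi> t < 1/4" by (rule order_tendstoD) simp
  moreover have "\<forall>\<^sub>F t in at_top. (t::real) > 0" by (rule eventually_gt_at_top)
  ultimately obtain T where T: "\<Psi> T < 1/4" "T > 0"
    using eventually_happens[OF eventually_conj] by (metis trivial_limit_at_top_linorder)
  show ?thesis
  proof (intro exI[of _ T] conjI allI impI T(2))
    fix b assume b: "supported N b"
    have e: "cmod (E T b \<mu> \<nu>) \<le> sqrt (En b) * (\<Sum>p\<in>L \<times> L. cmod (G T p \<mu> \<nu>))" for \<mu> \<nu>
    proof -
      have "cmod (E T b \<mu> \<nu>) \<le> (\<Sum>p\<in>L \<times> L. cmod (b (fst p) (snd p) * G T p \<mu> \<nu>))"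
        unfolding expl_rep[OF b] G_def by (rule norm_sum)
      also have "\<dots> \<le> (\<Sum>p\<in>L \<times> L. sqrt (En b) * cmod (G T p \<mu> \<nu>))"
        by (intro sum_mono) (auto simp: norm_mult intro!: mult_right_mono entry_le_sqrtEn)
      finally show ?thesis by (simp add: sum_distrib_left)
    qed
    have "En (E T b) = (\<Sum>\<mu>\<in>L. \<Sum>\<nu>\<in>L. (cmod (E T b \<mu> \<nu>))\<^sup>2)" by (simp add: En_def)
    also have "\<dots> \<le> (\<Sum>\<mu>\<in>L. \<Sum>\<nu>\<in>L. (sqrt (En b) * (\<Sum>p\<in>L \<times> L. cmod (G T p \<mu> \<nu>)))\<^sup>2)"
      by (intro sum_mono power_mono e norm_ge_zero)
    also have "\<dots> = (\<Sum>\<mu>\<in>L. \<Sum>\<nu>\<in>L. En b * (\<Sum>p\<in>L \<times> L. cmod (G T p \<mu> \<nu>))\<^sup>2)"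
      by (intro sum.cong refl) (simp add: power_mult_distrib En_nonneg)
    also have "\<dots> = En b * \<Psi> T"
      unfolding \<Psi>_def by (simp add: sum_distrib_left)
    also have "\<dots> \<le> En b * (1/4)" using T(1) En_nonneg[of b] by (intro mult_left_mono) auto
    finally show "En (E T b) \<le> En b / 4" by simp
  qed
qed

lemma exp_decay:
  assumes b: "supported N b"
  shows "\<exists>C a0. a0 > 0 \<and> (\<forall>t\<ge>0. \<forall>\<mu> \<nu>. cmod (E t b \<mu> \<nu>) \<le> C * exp (- a0 * t))"
proof -
  obtain T where T: "T > 0" "\<And>b. supported N b \<Longrightarrow> En (E T b) \<le> En b / 4"
    using contract by blast
  have it: "En (E (real k * T) b) \<le> En b / 4 ^ k" for k
  proof (induction k)
    case 0 then show ?case by (simp add: expl_zero)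
  next
    case (Suc k)
    have "E (real (Suc k) * T) b = E (T + real k * T) b" by (simp add: algebra_simps)
    also have "\<dots> = E T (E (real k * T) b)" by (rule semigroup[OF b]) (use T in simp)
    finally have "En (E (real (Suc k) * T) b) \<le> En (E (real k * T) b) / 4"
      using T(2)[OF expl_supported[OF b]] by simp
    also have "\<dots> \<le> En b / 4 ^ k / 4" using Suc by simp
    finally show ?case by (simp add: field_simps)
  qed
  define a0 where "a0 = ln 2 / T"
  define C where "C = 2 * sqrt (En b)"
  have "\<forall>t\<ge>0. \<forall>\<mu> \<nu>. cmod (E t b \<mu> \<nu>) \<le> C * exp (- a0 * t)"
  proof (intro allI impI)
    fix t :: real and \<mu> \<nu> assume t: "t \<ge> 0"
    define k where "k = nat \<lfloor>t / T\<rfloor>"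
    have kT: "real k * T \<le> t" unfolding k_def using t T(1)
      by (metis divide_nonneg_pos floor_divide_lower le_nat_floor nat_le_iff of_nat_nat zero_le_floor)
    have kge: "real k \<ge> t / T - 1" unfolding k_def using t T(1) by linarith
    have En_t: "En (E t b) \<le> En b / 4 ^ k"
      using En_mono[OF sol_expl[OF b] kT] it[of k] by linarith
    have "exp (ln 2 * real k) = 2 ^ k" by (subst mult.commute) (simp add: exp_of_nat_mult)
    moreover have "exp (ln 2 * real k) \<ge> exp (ln 2 * (t / T - 1))"
      using kge by simp
    ultimately have p2: "2 ^ k \<ge> exp (a0 * t) / 2"
      unfolding a0_def by (simp add: exp_diff right_diff_distrib)
    show "cmod (E t b \<mu> \<nu>) \<le> C * exp (- a0 * t)"
    proof (cases "\<mu> \<in> L \<and> \<nu> \<in> L")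
      case True
      have "cmod (E t b \<mu> \<nu>) \<le> sqrt (En (E t b))" using True entry_le_sqrtEn by blast
      also have "\<dots> \<le> sqrt (En b / 4 ^ k)" using En_t by simp
      also have "\<dots> = sqrt (En b) / 2 ^ k"
        by (simp add: real_sqrt_divide real_sqrt_power)
      also have "\<dots> \<le> sqrt (En b) / (exp (a0 * t) / 2)"
        using p2 En_nonneg[of b] by (intro divide_left_mono) auto
      also have "\<dots> = C * exp (- a0 * t)" unfolding C_def by (simp add: exp_minus field_simps)
      finally show ?thesis .
    next
      case False
      then show ?thesis using expl_supported[OF b] En_nonneg[of b] unfolding C_def by (simp add: supp_out)
    qed
  qed
  moreover have "a0 > 0" unfolding a0_def using T(1) by simp
  ultimately show ?thesis by blast
qed

lemma expl_cont_on: "supported N b \<Longrightarrow> continuous_on S (\<lambda>t. E t b \<mu> \<nu>)"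
  by (intro continuous_at_imp_continuous_on ballI has_vector_derivative_continuous[OF expl_deriv])

lemma expl_abs_integrable:
  assumes b: "supported N b"
  shows "(\<lambda>t. E t b \<mu> \<nu>) absolutely_integrable_on {0..}"
proof -
  obtain C a0 where ca: "a0 > 0" "\<And>t \<mu> \<nu>. t \<ge> 0 \<Longrightarrow> cmod (E t b \<mu> \<nu>) \<le> C * exp (- a0 * t)"
    using exp_decay[OF b] by blast
  show ?thesis
  proof (rule measurable_bounded_by_integrable_imp_absolutely_integrable)
    show "(\<lambda>t. E t b \<mu> \<nu>) \<in> borel_measurable (lebesgue_on {0..})"
      by (rule continuous_imp_measurable_on_sets_lebesgue[OF expl_cont_on[OF b]]) simp
    show "{0::real..} \<in> sets lebesgue" by simp
    show "(\<lambda>t. C * exp (- a0 * t)) integrable_on {0..}"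
      using integrable_on_cmult_left[OF integrable_on_exp_minus_to_infinity[OF ca(1), of 0], of C]
      by simp
    show "\<And>t. t \<in> {0..} \<Longrightarrow> norm (E t b \<mu> \<nu>) \<le> C * exp (- a0 * t)" using ca(2) by auto
  qed
qed

lemma expl_integrable: "supported N b \<Longrightarrow> (\<lambda>t. E t b \<mu> \<nu>) integrable_on {0..}"
  using expl_abs_integrable set_lebesgue_integral_eq_integral(1) by blast

lemma ftc_inf:
  assumes b: "supported N b"
  shows "integral {0..} (\<lambda>t. E t (l b) \<mu> \<nu>) = - b \<mu> \<nu>"
proof -
  have lb: "supported N (l b)" by (rule supported_lind[OF b])
  let ?g = "\<lambda>t. E t b \<mu> \<nu>" and ?g' = "\<lambda>t. E t (l b) \<mu> \<nu>"
  obtain C a0 where ca: "a0 > 0" "\<And>t \<mu> \<nu>. t \<ge> 0 \<Longrightarrow> cmod (E t (l b) \<mu> \<nu>) \<le> C * exp (- a0 * t)"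
    using exp_decay[OF lb] by blast
  define f where "f k t = (if t \<in> {..real k} then ?g' t else 0)" for k :: nat and t
  have ftc: "(?g' has_integral (?g (real k) - ?g 0)) {0..real k}" for k :: nat
  proof (rule fundamental_theorem_of_calculus)
    fix t :: real
    show "(?g has_vector_derivative ?g' t) (at t within {0..real k})"
      using expl_deriv[OF b, of \<mu> \<nu> t] expl_lind[OF b, of t] by simp
  qed simp
  have fk: "(f k has_integral (?g (real k) - ?g 0)) {0..}" for k :: nat
  proof -
    have "{..real k} \<inter> {0..} = {0..real k}" by auto
    then show ?thesis unfolding f_def using ftc[of k] has_integral_restrict_Int[of "{..real k}" ?g' _ "{0..}"]
      by simp
  qed
  have dc: "(\<lambda>k. integral {0..} (f k)) \<longlonglongrightarrow> integral {0..} ?g'"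
  proof (rule dominated_convergence(2))
    show "\<And>k. f k integrable_on {0..}" using fk by blast
    show "(\<lambda>t. C * exp (- a0 * t)) integrable_on {0..}"
      using integrable_on_cmult_left[OF integrable_on_exp_minus_to_infinity[OF ca(1), of 0], of C]
      by simp
    have h0: "\<And>t. t \<ge> 0 \<Longrightarrow> 0 \<le> C * exp (- a0 * t)"
      using ca(2) norm_ge_zero order.trans by blast
    show "\<And>k t. t \<in> {0..} \<Longrightarrow> norm (f k t) \<le> C * exp (- a0 * t)"
      unfolding f_def using ca(2) h0 by auto
    show "\<And>t. t \<in> {0..} \<Longrightarrow> (\<lambda>k. f k t) \<longlonglongrightarrow> ?g' t"
    proof -
      fix t :: real
      show "(\<lambda>k. f k t) \<longlonglongrightarrow> ?g' t"
      proof (rule tendsto_eventually)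
        show "\<forall>\<^sub>F k in sequentially. f k t = ?g' t"
          unfolding eventually_sequentially f_def
        proof (rule exI[of _ "nat \<lceil>t\<rceil>"], intro allI impI)
          fix n assume "nat \<lceil>t\<rceil> \<le> n"
          then have "real (nat \<lceil>t\<rceil>) \<le> real n" by (rule of_nat_mono)
          then have "t \<le> real n" using real_nat_ceiling_ge[of t] by linarith
          then show "(if t \<in> {..real n} then E t (l b) \<mu> \<nu> else 0) = E t (l b) \<mu> \<nu>" by simp
        qed
      qed
    qed
  qed
  have "(\<lambda>k. integral {0..} (f k)) = (\<lambda>k. ?g (real k) - ?g 0)"
    using fk by (auto intro: integral_unique)
  moreover have "(\<lambda>k. ?g (real k) - ?g 0) \<longlonglongrightarrow> 0 - b \<mu> \<nu>"
    by (intro tendsto_diff filterlim_compose[OF entries_decay[OF b] filterlim_real_sequentially])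
       (simp add: expl_zero)
  ultimately have "(\<lambda>k. integral {0..} (f k)) \<longlonglongrightarrow> - b \<mu> \<nu>" by simp
  then show ?thesis using dc LIMSEQ_unique by blast
qed

definition Int0 :: "cmat \<Rightarrow> cmat" where
  "Int0 b = (\<lambda>\<mu> \<nu>. integral {0..} (\<lambda>t. E t b \<mu> \<nu>))"

lemma Int0_supported: "supported N b \<Longrightarrow> supported N (Int0 b)"
  unfolding supported_def Int0_def
  using expl_supported[unfolded supported_def] by simp

lemma lind_Int0:
  assumes b: "supported N b"
  shows "l (Int0 b) = (\<lambda>\<mu> \<nu>. - b \<mu> \<nu>)"
proof (intro ext)
  fix \<mu> \<nu>
  show "l (Int0 b) \<mu> \<nu> = - b \<mu> \<nu>"
  proof (cases "\<mu> \<in> L \<and> \<nu> \<in> L")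
    case True
    have "l (Int0 b) \<mu> \<nu> = (\<Sum>\<kappa>\<in>L. \<Sum>\<rho>\<in>L. C \<mu> \<nu> \<kappa> \<rho> * Int0 b \<kappa> \<rho>)"
      by (rule lind_lincomb[OF Int0_supported[OF b]]) (use True in auto)
    also have "\<dots> = (\<Sum>\<kappa>\<in>L. \<Sum>\<rho>\<in>L. C \<mu> \<nu> \<kappa> \<rho> * integral {0..} (\<lambda>t. E t b \<kappa> \<rho>))"
      unfolding Int0_def ..
    also have "\<dots> = (\<Sum>\<kappa>\<in>L. \<Sum>\<rho>\<in>L. integral {0..} (\<lambda>t. C \<mu> \<nu> \<kappa> \<rho> * E t b \<kappa> \<rho>))"
      by simp
    also have "\<dots> = (\<Sum>\<kappa>\<in>L. integral {0..} (\<lambda>t. \<Sum>\<rho>\<in>L. C \<mu> \<nu> \<kappa> \<rho> * E t b \<kappa> \<rho>))"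
      by (intro sum.cong refl integral_sum[symmetric] finite_lattice integrable_on_mult_right expl_integrable b)
    also have "\<dots> = integral {0..} (\<lambda>t. \<Sum>\<kappa>\<in>L. \<Sum>\<rho>\<in>L. C \<mu> \<nu> \<kappa> \<rho> * E t b \<kappa> \<rho>)"
      by (intro integral_sum[symmetric] finite_lattice integrable_sum integrable_on_mult_right expl_integrable b)
    also have "\<dots> = integral {0..} (\<lambda>t. E t (l b) \<mu> \<nu>)"
      using True by (simp add: lind_lincomb expl_supported b expl_lind)
    also have "\<dots> = - b \<mu> \<nu>" by (rule ftc_inf[OF b])
    finally show ?thesis .
  next
    case False
    then show ?thesis using b supported_lind[OF Int0_supported[OF b]] by (simp add: supp_out)
  qed
qed

end

context sys begin

lemma lin2:
  assumes a: "supported N a" and b: "supported N b"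
  shows "l (\<lambda>\<mu> \<nu>. x * a \<mu> \<nu> + y * b \<mu> \<nu>) = (\<lambda>\<mu> \<nu>. x * l a \<mu> \<nu> + y * l b \<mu> \<nu>)"
proof -
  have "l (\<lambda>\<mu> \<nu>. \<Sum>s\<in>{True, False}. (if s then x else y) * (if s then a else b) \<mu> \<nu>)
     = (\<lambda>\<mu> \<nu>. \<Sum>s\<in>{True, False}. (if s then x else y) * l (if s then a else b) \<mu> \<nu>)"
    by (rule lind_sum) (use a b in auto)
  then show ?thesis by simp
qed

lemma inj_l:
  assumes a: "supported N a" and z: "l a = (\<lambda>\<mu> \<nu>. 0)"
  shows "a = (\<lambda>\<mu> \<nu>. 0)"
proof (intro ext)
  fix \<mu> \<nu>
  have t1: "((\<lambda>t. E t a \<mu> \<nu>) \<longlongrightarrow> 0) at_top" by (rule entries_decay[OF a])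
  have t2: "\<forall>\<^sub>F t in at_top. E t a \<mu> \<nu> = a \<mu> \<nu>"
    using eventually_ge_at_top[of "0::real"] by eventually_elim (simp add: const_sol[OF a z])
  have "((\<lambda>t::real. a \<mu> \<nu>) \<longlongrightarrow> 0) at_top"
    by (rule Lim_transform_eventually[OF t1 t2])
  then show "a \<mu> \<nu> = 0" by (simp add: tendsto_const_iff)
qed

lemma inj_l2:
  assumes a: "supported N a" and b: "supported N b" and e: "l a = l b"
  shows "a = b"
proof -
  have "l (\<lambda>\<mu> \<nu>. a \<mu> \<nu> - b \<mu> \<nu>) = (\<lambda>\<mu> \<nu>. 0)" using lind_diff[OF a b] e by simp
  then have "(\<lambda>\<mu> \<nu>. a \<mu> \<nu> - b \<mu> \<nu>) = (\<lambda>\<mu> \<nu>. 0)"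
    by (rule inj_l[rotated]) (use a b in \<open>auto simp: supported_def\<close>)
  then show ?thesis by (intro ext) (metis eq_iff_diff_eq_0)
qed

definition neg :: "cmat \<Rightarrow> cmat" where "neg b = (\<lambda>\<mu> \<nu>. - b \<mu> \<nu>)"

lemma neg_supp: "supported N b \<Longrightarrow> supported N (neg b)"
  unfolding neg_def supported_def by auto

lemma exists_inv:
  assumes b: "supported N b"
  shows "supported N (Int0 (neg b)) \<and> l (Int0 (neg b)) = b"
proof
  show "supported N (Int0 (neg b))" by (rule Int0_supported[OF neg_supp[OF b]])
  have "l (Int0 (neg b)) = (\<lambda>\<mu> \<nu>. - neg b \<mu> \<nu>)" by (rule lind_Int0[OF neg_supp[OF b]])
  also have "\<dots> = b" unfolding neg_def by simp
  finally show "l (Int0 (neg b)) = b" .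
qed

lemma unique_inv:
  assumes b: "supported N b"
  shows "\<exists>!a. supported N a \<and> l a = b"
proof (rule ex1I[of _ "Int0 (neg b)"])
  show "supported N (Int0 (neg b)) \<and> l (Int0 (neg b)) = b" by (rule exists_inv[OF b])
next
  fix a assume a: "supported N a \<and> l a = b"
  show "a = Int0 (neg b)"
    by (rule inj_l2) (use a exists_inv[OF b] in auto)
qed

lemma linv_eq:
  assumes b: "supported N b"
  shows "linv N v zl zr \<beta> b = Int0 (neg b)"
proof -
  have "(THE a. supported N a \<and> l a = b) = Int0 (neg b)"
  proof (rule the_equality)
    show "supported N (Int0 (neg b)) \<and> l (Int0 (neg b)) = b" by (rule exists_inv[OF b])
    fix a assume a: "supported N a \<and> l a = b"
    show "a = Int0 (neg b)"
      by (rule inj_l2) (use a exists_inv[OF b] in auto)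
  qed
  then show ?thesis unfolding linv_def .
qed

lemma expl_neg: "supported N b \<Longrightarrow> E t (neg b) = neg (E t b)"
proof -
  assume b: "supported N b"
  have "E t (\<lambda>\<mu> \<nu>. \<Sum>s\<in>{True}. (-1) * b \<mu> \<nu>) = (\<lambda>\<mu> \<nu>. \<Sum>s\<in>{True}. (-1) * E t b \<mu> \<nu>)"
    by (rule expl_sum[where f="\<lambda>s. b" and c="\<lambda>s. -1"]) (use b in auto)
  then show ?thesis unfolding neg_def by simp
qed

lemma Int0_neg: "supported N b \<Longrightarrow> Int0 (neg b) = neg (Int0 b)"
proof -
  assume b: "supported N b"
  show ?thesis unfolding Int0_def expl_neg[OF b] unfolding neg_def by simp
qed

end

lemma sum_restrict: "finite A \<Longrightarrow> B \<subseteq> A \<Longrightarrow> (\<Sum>x\<in>A. if x \<in> B then g x else 0) = (\<Sum>x\<in>B. g x)"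
  using sum.inter_restrict[of A g B] by (simp add: Int_absorb1)

definition adj :: "cmat \<Rightarrow> cmat" where "adj a = (\<lambda>\<mu> \<nu>. cnj (a \<nu> \<mu>))"

lemma dco_sym: "dco N zl zr \<beta> \<mu> \<nu> = dco N zl zr \<beta> \<nu> \<mu>"
  unfolding dco_def by (simp add: add.commute)

context sys begin

lemma adj_supp: "supported N a \<Longrightarrow> supported N (adj a)"
  unfolding supported_def adj_def by auto

lemma lind_adj:
  assumes a: "supported N a"
  shows "l (adj a) = adj (l a)"
proof (intro ext)
  fix \<mu> \<nu>
  show "l (adj a) \<mu> \<nu> = adj (l a) \<mu> \<nu>"
  proof (cases "\<mu> \<in> L \<and> \<nu> \<in> L")
    case True
    have m1: "mmul N (ham N v) (adj a) \<mu> \<nu> = cnj (mmul N a (ham N v) \<nu> \<mu>)"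
      unfolding mmul_def adj_def by (simp add: ham_real ham_sym mult.commute)
    have m2: "mmul N (adj a) (ham N v) \<mu> \<nu> = cnj (mmul N (ham N v) a \<nu> \<mu>)"
      unfolding mmul_def adj_def by (simp add: ham_real ham_sym mult.commute)
    show ?thesis
      unfolding lind_eq[OF adj_supp[OF a]] m1 m2 using True
      by (simp add: adj_def lind_eq[OF a] dco_sym[of N zl zr \<beta> \<nu> \<mu>] algebra_simps)
  next
    case False
    then show ?thesis using supported_lind[OF adj_supp[OF a]] supported_lind[OF a]
      unfolding adj_def by (auto simp: supp_out)
  qed
qed

lemma herm_unique:
  assumes a: "supported N a" and q: "adj (l a) = l a"
  shows "adj a = a"
  by (rule inj_l2) (use a q adj_supp lind_adj in auto)

lemma flux:
  assumes n: "1 \<le> n" "n < N!0"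
  shows "(\<Sum>\<nu>\<in>{\<nu>\<in>L. \<nu>!0 \<le> n}. mmul N (ham N v) R \<nu> \<nu> - mmul N R (ham N v) \<nu> \<nu>)
       = (\<Sum>\<nu>\<in>slice N n. R \<nu> (splus \<nu>) - R (splus \<nu>) \<nu>)"
proof -
  let ?h = "ham N v"
  define U where "U = {\<nu>\<in>L. \<nu>!0 \<le> n}"
  have UL: "U \<subseteq> L" unfolding U_def by auto
  have fU: "finite U" using UL finite_lattice finite_subset by blast
  have fLU: "finite (L - U)" using finite_lattice by simp
  have split: "(\<Sum>\<kappa>\<in>L. f \<kappa>) = (\<Sum>\<kappa>\<in>U. f \<kappa>) + (\<Sum>\<kappa>\<in>L - U. f \<kappa>)" for f :: "site \<Rightarrow> complex"
    by (metis add.commute sum.subset_diff[OF UL finite_lattice])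
  have inner: "(\<Sum>\<nu>\<in>U. \<Sum>\<kappa>\<in>U. ?h \<nu> \<kappa> * R \<kappa> \<nu> - R \<nu> \<kappa> * ?h \<kappa> \<nu>) = 0"
  proof -
    have "(\<Sum>\<nu>\<in>U. \<Sum>\<kappa>\<in>U. R \<nu> \<kappa> * ?h \<kappa> \<nu>) = (\<Sum>\<kappa>\<in>U. \<Sum>\<nu>\<in>U. R \<nu> \<kappa> * ?h \<kappa> \<nu>)"
      by (rule sum.swap)
    also have "\<dots> = (\<Sum>\<nu>\<in>U. \<Sum>\<kappa>\<in>U. ?h \<nu> \<kappa> * R \<kappa> \<nu>)"
      by (simp add: ham_sym mult.commute)
    finally show ?thesis by (simp add: sum_subtractf)
  qed
  have outer: "(\<Sum>\<kappa>\<in>L - U. ?h \<nu> \<kappa> * R \<kappa> \<nu> - R \<nu> \<kappa> * ?h \<kappa> \<nu>)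
      = (if \<nu>!0 = n then R \<nu> (splus \<nu>) - R (splus \<nu>) \<nu> else 0)" if nu: "\<nu> \<in> U" for \<nu>
  proof -
    have nL: "\<nu> \<in> L" and nle: "\<nu>!0 \<le> n" using nu unfolding U_def by auto
    have zero: "?h \<nu> \<kappa> = 0" if k: "\<kappa> \<in> L - U" "\<kappa> \<noteq> splus \<nu>" for \<kappa>
    proof -
      have kL: "\<kappa> \<in> L" and kgt: "\<kappa>!0 > n" using k unfolding U_def by auto
      have "\<not> nn N \<nu> \<kappa>" using nn_up[OF Nne nL kL] kgt nle k(2) by auto
      moreover have "\<kappa> \<noteq> \<nu>" using kgt nle by auto
      ultimately show ?thesis unfolding ham_def by simp
    qed
    show ?thesis
    proof (cases "\<nu>!0 = n")
      case True
      have lt: "\<nu>!0 < N!0" using True n by simp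
      have ne: "\<nu> \<noteq> []" using nL Nne unfolding lattice_def by auto
      have sp: "splus \<nu> \<in> L - U" using splus_latt[OF Nne nL lt] splus_0[OF ne] True unfolding U_def by auto
      have "(\<Sum>\<kappa>\<in>L - U. ?h \<nu> \<kappa> * R \<kappa> \<nu> - R \<nu> \<kappa> * ?h \<kappa> \<nu>)
          = (?h \<nu> (splus \<nu>) * R (splus \<nu>) \<nu> - R \<nu> (splus \<nu>) * ?h (splus \<nu>) \<nu>)
            + (\<Sum>\<kappa>\<in>L - U - {splus \<nu>}. ?h \<nu> \<kappa> * R \<kappa> \<nu> - R \<nu> \<kappa> * ?h \<kappa> \<nu>)"
        by (rule sum.remove[OF fLU sp])
      also have "(\<Sum>\<kappa>\<in>L - U - {splus \<nu>}. ?h \<nu> \<kappa> * R \<kappa> \<nu> - R \<nu> \<kappa> * ?h \<kappa> \<nu>) = 0"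
        by (intro sum.neutral ballI) (use zero ham_sym in auto)
      finally show ?thesis using True ham_nn_splus[OF nL lt] ham_sym[of N v "splus \<nu>" \<nu>] by simp
    next
      case False
      have "(\<Sum>\<kappa>\<in>L - U. ?h \<nu> \<kappa> * R \<kappa> \<nu> - R \<nu> \<kappa> * ?h \<kappa> \<nu>) = 0"
      proof (intro sum.neutral ballI)
        fix \<kappa> assume k: "\<kappa> \<in> L - U"
        have "\<kappa> \<noteq> splus \<nu>"
        proof
          assume "\<kappa> = splus \<nu>"
          moreover have "\<nu> \<noteq> []" using nL Nne unfolding lattice_def by auto
          ultimately have "\<kappa>!0 = \<nu>!0 + 1" by (simp add: splus_0)
          then show False using k False nle unfolding U_def by auto
        qed
        then have "?h \<nu> \<kappa> = 0" using zero k by blast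
        then show "?h \<nu> \<kappa> * R \<kappa> \<nu> - R \<nu> \<kappa> * ?h \<kappa> \<nu> = 0" using ham_sym[of N v \<kappa> \<nu>] by simp
      qed
      then show ?thesis using False by simp
    qed
  qed
  have "(\<Sum>\<nu>\<in>U. mmul N ?h R \<nu> \<nu> - mmul N R ?h \<nu> \<nu>)
      = (\<Sum>\<nu>\<in>U. \<Sum>\<kappa>\<in>L. ?h \<nu> \<kappa> * R \<kappa> \<nu> - R \<nu> \<kappa> * ?h \<kappa> \<nu>)"
    unfolding mmul_def by (simp add: sum_subtractf)
  also have "\<dots> = (\<Sum>\<nu>\<in>U. \<Sum>\<kappa>\<in>U. ?h \<nu> \<kappa> * R \<kappa> \<nu> - R \<nu> \<kappa> * ?h \<kappa> \<nu>)
      + (\<Sum>\<nu>\<in>U. \<Sum>\<kappa>\<in>L - U. ?h \<nu> \<kappa> * R \<kappa> \<nu> - R \<nu> \<kappa> * ?h \<kappa> \<nu>)"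
    unfolding split sum.distrib ..
  also have "\<dots> = (\<Sum>\<nu>\<in>U. if \<nu>!0 = n then R \<nu> (splus \<nu>) - R (splus \<nu>) \<nu> else 0)"
    unfolding inner by (simp add: outer)
  also have "\<dots> = (\<Sum>\<nu>\<in>{x \<in> U. x!0 = n}. R \<nu> (splus \<nu>) - R (splus \<nu>) \<nu>)"
    by (rule sum.inter_filter[symmetric, OF fU])
  also have "{x \<in> U. x!0 = n} = slice N n" unfolding U_def slice_def by auto
  finally show ?thesis unfolding U_def .
qed

end

lemma im_ident: "- \<i> * (cnj z - z) = - complex_of_real (2 * Im z)"
  by (simp add: complex_eq_iff)

lemma im_ident2: "2 * complex_of_real (Im z) = \<i> * (cnj z - z)"
  by (simp add: complex_eq_iff)

context sys begin

lemma P1_supp: "supported N (P1 N)"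
  unfolding supported_def P1_eq using slice_sub by auto
lemma PN_supp: "supported N (PN N)"
  unfolding supported_def PN_eq using slice_sub by auto

definition Qm :: "real \<Rightarrow> real \<Rightarrow> cmat" where
  "Qm ail air = (\<lambda>x y. 2 * complex_of_real ail * P1 N x y + 2 * complex_of_real air * PN N x y)"

lemma Qm_supp: "supported N (Qm ail air)"
  using P1_supp PN_supp unfolding supported_def Qm_def by auto

lemma Rinf_eq: "Rinf N v zl zr \<beta> ail air = Int0 (Qm ail air)"
  unfolding Rinf_def Int0_def Qm_def ..

lemma R_herm: "adj (Int0 (Qm ail air)) = Int0 (Qm ail air)"
proof (rule herm_unique)
  show "supported N (Int0 (Qm ail air))" by (rule Int0_supported[OF Qm_supp])
  have "adj (Qm ail air) = Qm ail air"
    unfolding adj_def Qm_def P1_eq PN_eq by (intro ext) auto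
  then show "adj (l (Int0 (Qm ail air))) = l (Int0 (Qm ail air))"
    unfolding lind_Int0[OF Qm_supp] unfolding adj_def by (metis complex_cnj_minus)
qed

lemma dco_diag_U: "\<nu> \<in> L \<Longrightarrow> \<nu>!0 < N!0 \<Longrightarrow>
   dco N zl zr \<beta> \<nu> \<nu> = (if \<nu> \<in> slice N 1 then 2 * zl else 0)"
  unfolding dco_def ind_def slice_def by auto

lemma current_formula:
  assumes n: "1 \<le> n" "n < N!0"
  shows "complex_of_real (current N v zl zr \<beta> ail air n)
     = 2 * complex_of_real ail * of_nat (card (slice N 1))
       - 2 * complex_of_real zl * (\<Sum>\<nu>\<in>slice N 1. Int0 (Qm ail air) \<nu> \<nu>)"
proof -
  let ?R = "Int0 (Qm ail air)"
  let ?h = "ham N v"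
  define U where "U = {\<nu>\<in>L. \<nu>!0 \<le> n}"
  have UL: "U \<subseteq> L" unfolding U_def by auto
  have fU: "finite U" using UL finite_lattice finite_subset by blast
  have M1U: "slice N 1 \<subseteq> U" unfolding U_def slice_def using n by auto
  have Rs: "supported N ?R" by (rule Int0_supported[OF Qm_supp])
  have lR: "l ?R = (\<lambda>\<mu> \<nu>. - Qm ail air \<mu> \<nu>)" by (rule lind_Int0[OF Qm_supp])
  have diag: "- \<i> * (mmul N ?h ?R \<nu> \<nu> - mmul N ?R ?h \<nu> \<nu>)
      - complex_of_real (if \<nu> \<in> slice N 1 then 2 * zl else 0) * ?R \<nu> \<nu>
      = (if \<nu> \<in> slice N 1 then - 2 * complex_of_real ail else 0)" if nu: "\<nu> \<in> U" for \<nu>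
  proof -
    have nL: "\<nu> \<in> L" and lt: "\<nu>!0 < N!0" using nu n unfolding U_def by auto
    have "l ?R \<nu> \<nu> = - Qm ail air \<nu> \<nu>" using lR by simp
    moreover have "\<nu> \<notin> slice N (N!0)" using lt unfolding slice_def by auto
    ultimately show ?thesis
      unfolding lind_eq[OF Rs] using nL lt by (simp add: dco_diag_U Qm_def P1_eq PN_eq)
  qed
  have "(\<Sum>\<nu>\<in>U. - \<i> * (mmul N ?h ?R \<nu> \<nu> - mmul N ?R ?h \<nu> \<nu>)
      - complex_of_real (if \<nu> \<in> slice N 1 then 2 * zl else 0) * ?R \<nu> \<nu>)
      = (\<Sum>\<nu>\<in>U. if \<nu> \<in> slice N 1 then - 2 * complex_of_real ail else 0)"
    by (intro sum.cong refl diag)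
  also have "\<dots> = - 2 * complex_of_real ail * of_nat (card (slice N 1))"
    by (subst sum_restrict[OF fU M1U]) simp
  finally have eq1: "(\<Sum>\<nu>\<in>U. - \<i> * (mmul N ?h ?R \<nu> \<nu> - mmul N ?R ?h \<nu> \<nu>)
      - complex_of_real (if \<nu> \<in> slice N 1 then 2 * zl else 0) * ?R \<nu> \<nu>)
      = - 2 * complex_of_real ail * of_nat (card (slice N 1))" .
  have s2: "(\<Sum>\<nu>\<in>U. complex_of_real (if \<nu> \<in> slice N 1 then 2 * zl else 0) * ?R \<nu> \<nu>)
      = 2 * complex_of_real zl * (\<Sum>\<nu>\<in>slice N 1. ?R \<nu> \<nu>)"
  proof -
    have "(\<Sum>\<nu>\<in>U. complex_of_real (if \<nu> \<in> slice N 1 then 2 * zl else 0) * ?R \<nu> \<nu>)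
        = (\<Sum>\<nu>\<in>U. if \<nu> \<in> slice N 1 then 2 * complex_of_real zl * ?R \<nu> \<nu> else 0)"
      by (intro sum.cong refl) simp
    also have "\<dots> = (\<Sum>\<nu>\<in>slice N 1. 2 * complex_of_real zl * ?R \<nu> \<nu>)"
      by (rule sum_restrict[OF fU M1U])
    finally show ?thesis by (simp add: sum_distrib_left)
  qed
  have s1: "(\<Sum>\<nu>\<in>U. mmul N ?h ?R \<nu> \<nu> - mmul N ?R ?h \<nu> \<nu>)
       = (\<Sum>\<nu>\<in>slice N n. cnj (?R (splus \<nu>) \<nu>) - ?R (splus \<nu>) \<nu>)"
  proof -
    have "(\<Sum>\<nu>\<in>U. mmul N ?h ?R \<nu> \<nu> - mmul N ?R ?h \<nu> \<nu>)
       = (\<Sum>\<nu>\<in>slice N n. ?R \<nu> (splus \<nu>) - ?R (splus \<nu>) \<nu>)"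
      unfolding U_def by (rule flux[OF n])
    also have "\<dots> = (\<Sum>\<nu>\<in>slice N n. cnj (?R (splus \<nu>) \<nu>) - ?R (splus \<nu>) \<nu>)"
    proof (intro sum.cong refl)
      fix \<nu>
      have "?R \<nu> (splus \<nu>) = adj ?R \<nu> (splus \<nu>)" using R_herm[of ail air] by simp
      then show "?R \<nu> (splus \<nu>) - ?R (splus \<nu>) \<nu> = cnj (?R (splus \<nu>) \<nu>) - ?R (splus \<nu>) \<nu>"
        unfolding adj_def by simp
    qed
    finally show ?thesis .
  qed
  have J: "complex_of_real (current N v zl zr \<beta> ail air n)
      = - (- \<i> * (\<Sum>\<nu>\<in>U. mmul N ?h ?R \<nu> \<nu> - mmul N ?R ?h \<nu> \<nu>))"
    unfolding s1 current_def Rinf_eq sum_distrib_left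
    by (simp add: im_ident2 sum_negf)
  have "(\<Sum>\<nu>\<in>U. - \<i> * (mmul N ?h ?R \<nu> \<nu> - mmul N ?R ?h \<nu> \<nu>)
      - complex_of_real (if \<nu> \<in> slice N 1 then 2 * zl else 0) * ?R \<nu> \<nu>)
      = (\<Sum>\<nu>\<in>U. - \<i> * (mmul N ?h ?R \<nu> \<nu> - mmul N ?R ?h \<nu> \<nu>))
      - (\<Sum>\<nu>\<in>U. complex_of_real (if \<nu> \<in> slice N 1 then 2 * zl else 0) * ?R \<nu> \<nu>)"
    by (rule sum_subtractf)
  also have "(\<Sum>\<nu>\<in>U. - \<i> * (mmul N ?h ?R \<nu> \<nu> - mmul N ?R ?h \<nu> \<nu>))
      = - \<i> * (\<Sum>\<nu>\<in>U. mmul N ?h ?R \<nu> \<nu> - mmul N ?R ?h \<nu> \<nu>)"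
    by (rule sum_distrib_left[symmetric])
  also note s2
  finally have "(\<Sum>\<nu>\<in>U. - \<i> * (mmul N ?h ?R \<nu> \<nu> - mmul N ?R ?h \<nu> \<nu>)
      - complex_of_real (if \<nu> \<in> slice N 1 then 2 * zl else 0) * ?R \<nu> \<nu>)
      = - \<i> * (\<Sum>\<nu>\<in>U. mmul N ?h ?R \<nu> \<nu> - mmul N ?R ?h \<nu> \<nu>)
        - 2 * complex_of_real zl * (\<Sum>\<nu>\<in>slice N 1. ?R \<nu> \<nu>)" .
  then show ?thesis using eq1 J by (simp add: algebra_simps)
qed

end

context sys begin

definition I1 :: cmat where "I1 = (\<lambda>\<mu> \<nu>. if \<mu> = \<nu> \<and> \<mu> \<in> L then 1 else 0)"

lemma I1_supp: "supported N I1" unfolding supported_def I1_def by auto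

lemma lind_I1: "l I1 = (\<lambda>\<mu> \<nu>. (-2 * complex_of_real zl) * P1 N \<mu> \<nu> + (-2 * complex_of_real zr) * PN N \<mu> \<nu>)"
proof (intro ext)
  fix \<mu> \<nu>
  show "l I1 \<mu> \<nu> = (-2 * complex_of_real zl) * P1 N \<mu> \<nu> + (-2 * complex_of_real zr) * PN N \<mu> \<nu>"
  proof (cases "\<mu> \<in> L \<and> \<nu> \<in> L")
    case True
    have m1: "mmul N (ham N v) I1 \<mu> \<nu> = ham N v \<mu> \<nu>"
    proof -
      have "mmul N (ham N v) I1 \<mu> \<nu> = (\<Sum>\<kappa>\<in>L. if \<kappa> = \<nu> then ham N v \<mu> \<kappa> else 0)"
        unfolding mmul_def I1_def using True by (intro sum.cong refl) auto
      also have "\<dots> = ham N v \<mu> \<nu>" using True by (simp add: sum_if_eq finite_lattice)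
      finally show ?thesis .
    qed
    have m2: "mmul N I1 (ham N v) \<mu> \<nu> = ham N v \<mu> \<nu>"
    proof -
      have "mmul N I1 (ham N v) \<mu> \<nu> = (\<Sum>\<kappa>\<in>L. if \<kappa> = \<mu> then ham N v \<kappa> \<nu> else 0)"
        unfolding mmul_def I1_def using True by (intro sum.cong refl) auto
      also have "\<dots> = ham N v \<mu> \<nu>" using True by (simp add: sum_if_eq finite_lattice)
      finally show ?thesis .
    qed
    show ?thesis unfolding lind_eq[OF I1_supp] m1 m2 using True
      by (auto simp: I1_def P1_eq PN_eq dco_def ind_def)
  next
    case False
    then show ?thesis using supported_lind[OF I1_supp] P1_supp PN_supp by (auto simp: supp_out)
  qed
qed

abbreviation "Am \<equiv> Int0 (neg (P1 N))"
abbreviation "Bm \<equiv> Int0 (neg (PN N))"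

lemma Am: "supported N Am" "l Am = P1 N" using exists_inv[OF P1_supp] by auto
lemma Bm: "supported N Bm" "l Bm = PN N" using exists_inv[OF PN_supp] by auto

lemma I1_decomp: "I1 = (\<lambda>\<mu> \<nu>. (-2 * complex_of_real zl) * Am \<mu> \<nu> + (-2 * complex_of_real zr) * Bm \<mu> \<nu>)"
proof (rule inj_l2[OF I1_supp])
  show "supported N (\<lambda>\<mu> \<nu>. (-2 * complex_of_real zl) * Am \<mu> \<nu> + (-2 * complex_of_real zr) * Bm \<mu> \<nu>)"
    using Am(1) Bm(1) unfolding supported_def by auto
  show "l I1 = l (\<lambda>\<mu> \<nu>. (-2 * complex_of_real zl) * Am \<mu> \<nu> + (-2 * complex_of_real zr) * Bm \<mu> \<nu>)"
    unfolding lin2[OF Am(1) Bm(1)] lind_I1 Am(2) Bm(2) ..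
qed

lemma R_decomp: "Int0 (Qm ail air) = (\<lambda>\<mu> \<nu>. (-2 * complex_of_real ail) * Am \<mu> \<nu> + (-2 * complex_of_real air) * Bm \<mu> \<nu>)"
proof (rule inj_l2[OF Int0_supported[OF Qm_supp]])
  show "supported N (\<lambda>\<mu> \<nu>. (-2 * complex_of_real ail) * Am \<mu> \<nu> + (-2 * complex_of_real air) * Bm \<mu> \<nu>)"
    using Am(1) Bm(1) unfolding supported_def by auto
  show "l (Int0 (Qm ail air)) = l (\<lambda>\<mu> \<nu>. (-2 * complex_of_real ail) * Am \<mu> \<nu> + (-2 * complex_of_real air) * Bm \<mu> \<nu>)"
    unfolding lin2[OF Am(1) Bm(1)] lind_Int0[OF Qm_supp] Am(2) Bm(2) by (simp add: Qm_def)
qed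

lemma tr_P1: "tr N (mmul N (P1 N) X) = (\<Sum>\<nu>\<in>slice N 1. X \<nu> \<nu>)"
proof -
  have "tr N (mmul N (P1 N) X) = (\<Sum>\<nu>\<in>L. if \<nu> \<in> slice N 1 then X \<nu> \<nu> else 0)"
    unfolding tr_def P1_def by (simp add: mmul_proj_left slice_sub finite_slice)
  also have "\<dots> = (\<Sum>\<nu>\<in>slice N 1. X \<nu> \<nu>)" by (rule sum_restrict[OF finite_lattice slice_sub])
  finally show ?thesis .
qed

lemma J_formula:
  assumes zl_def: "zl = ail + aol" and zr_def: "zr = air + aor"
  shows "complex_of_real (current N v zl zr \<beta> ail air 1)
     = - 4 * complex_of_real (ail * aor - aol * air) * (\<Sum>\<nu>\<in>slice N 1. Bm \<nu> \<nu>)"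
proof -
  let ?TA = "\<Sum>\<nu>\<in>slice N 1. Am \<nu> \<nu>" and ?TB = "\<Sum>\<nu>\<in>slice N 1. Bm \<nu> \<nu>"
  have c: "of_nat (card (slice N 1)) = (\<Sum>\<nu>\<in>slice N 1. I1 \<nu> \<nu>)"
    unfolding I1_def using slice_sub by (simp add: subset_iff)
  also have "\<dots> = (-2 * complex_of_real zl) * ?TA + (-2 * complex_of_real zr) * ?TB"
    by (subst I1_decomp) (simp only: sum.distrib sum_distrib_left[symmetric])
  finally have c1: "of_nat (card (slice N 1)) = (-2 * complex_of_real zl) * ?TA + (-2 * complex_of_real zr) * ?TB" .
  have r1: "(\<Sum>\<nu>\<in>slice N 1. Int0 (Qm ail air) \<nu> \<nu>) = (-2 * complex_of_real ail) * ?TA + (-2 * complex_of_real air) * ?TB"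
    by (subst R_decomp) (simp only: sum.distrib sum_distrib_left[symmetric])
  have "complex_of_real (current N v zl zr \<beta> ail air 1)
     = 2 * complex_of_real ail * of_nat (card (slice N 1))
       - 2 * complex_of_real zl * (\<Sum>\<nu>\<in>slice N 1. Int0 (Qm ail air) \<nu> \<nu>)"
    by (rule current_formula) (use N2 in auto)
  also have "\<dots> = - 4 * complex_of_real (ail * aor - aol * air) * ?TB"
  proof -
    have z1: "complex_of_real zl = complex_of_real ail + complex_of_real aol" using zl_def by simp
    have z2: "complex_of_real zr = complex_of_real air + complex_of_real aor" using zr_def by simp
    show ?thesis unfolding c1 r1 z1 z2 by (simp add: algebra_simps)
  qed
  finally show ?thesis .
qed

end

theorem mainTheorem17:
  fixes N :: "nat list" and v :: "site \<Rightarrow> real"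
    and ail aol air aor \<beta> :: real
  assumes "N \<noteq> []" and "\<forall>i<length N. 1 \<le> N!i" and "2 \<le> N!0"
    and "ail \<ge> 0" and "aol \<ge> 0" and "air \<ge> 0" and "aor \<ge> 0" and "\<beta> \<ge> 0"
    and "ail + aol > 0" and "air + aor > 0"
  shows "(\<forall>a. supported N a \<longrightarrow> (\<forall>\<mu> \<nu>.
            ((\<lambda>t. expl N v (ail + aol) (air + aor) \<beta> t a \<mu> \<nu>) \<longlongrightarrow> 0) at_top))
    \<and> (\<forall>n\<in>{1..<N!0}. current N v (ail + aol) (air + aor) \<beta> ail air n
                     = current N v (ail + aol) (air + aor) \<beta> ail air 1)
    \<and> (\<exists>!a. supported N a \<and> lind N v (ail + aol) (air + aor) \<beta> a = PN N)
    \<and> complex_of_real (current N v (ail + aol) (air + aor) \<beta> ail air 1)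
        = 4 * complex_of_real (ail * aor - aol * air) *
          integral {0..} (\<lambda>t. tr N (mmul N (P1 N) (expl N v (ail + aol) (air + aor) \<beta> t (PN N))))
    \<and> complex_of_real (current N v (ail + aol) (air + aor) \<beta> ail air 1)
        = - 4 * complex_of_real (ail * aor - aol * air) *
          tr N (mmul N (P1 N) (linv N v (ail + aol) (air + aor) \<beta> (PN N)))"
proof -
  interpret s: sys N v "ail + aol" "air + aor" \<beta>
    by unfold_locales (use assms in auto)
  let ?J = "\<lambda>n. current N v (ail + aol) (air + aor) \<beta> ail air n"
  let ?E = "expl N v (ail + aol) (air + aor) \<beta>"
  have c1: "\<forall>a. supported N a \<longrightarrow> (\<forall>\<mu> \<nu>. ((\<lambda>t. ?E t a \<mu> \<nu>) \<longlongrightarrow> 0) at_top)"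
    using s.entries_decay by blast
  have c2: "\<forall>n\<in>{1..<N!0}. ?J n = ?J 1"
  proof
    fix n assume n: "n \<in> {1..<N!0}"
    have "complex_of_real (?J n) = complex_of_real (?J 1)"
      using s.current_formula[of n ail air] s.current_formula[of 1 ail air] n assms(3) by auto
    then show "?J n = ?J 1" by simp
  qed
  have c3: "\<exists>!a. supported N a \<and> lind N v (ail + aol) (air + aor) \<beta> a = PN N"
    by (rule s.unique_inv[OF s.PN_supp])
  have JB: "complex_of_real (?J 1) = - 4 * complex_of_real (ail * aor - aol * air) * (\<Sum>\<nu>\<in>slice N 1. s.Bm \<nu> \<nu>)"
    by (rule s.J_formula) auto
  have c5: "complex_of_real (?J 1) = - 4 * complex_of_real (ail * aor - aol * air) *
          tr N (mmul N (P1 N) (linv N v (ail + aol) (air + aor) \<beta> (PN N)))"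
    unfolding s.linv_eq[OF s.PN_supp] s.tr_P1 by (rule JB)
  have "integral {0..} (\<lambda>t. tr N (mmul N (P1 N) (?E t (PN N))))
      = integral {0..} (\<lambda>t. \<Sum>\<nu>\<in>slice N 1. ?E t (PN N) \<nu> \<nu>)"
    unfolding s.tr_P1 ..
  also have "\<dots> = (\<Sum>\<nu>\<in>slice N 1. s.Int0 (PN N) \<nu> \<nu>)"
    unfolding s.Int0_def
    by (rule integral_sum) (auto simp: finite_slice intro: s.expl_integrable s.PN_supp)
  also have "\<dots> = - (\<Sum>\<nu>\<in>slice N 1. s.Bm \<nu> \<nu>)"
    unfolding s.Int0_neg[OF s.PN_supp] by (simp add: s.neg_def sum_negf)
  finally have "integral {0..} (\<lambda>t. tr N (mmul N (P1 N) (?E t (PN N)))) = - (\<Sum>\<nu>\<in>slice N 1. s.Bm \<nu> \<nu>)" .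
  then have c4: "complex_of_real (?J 1) = 4 * complex_of_real (ail * aor - aol * air) *
          integral {0..} (\<lambda>t. tr N (mmul N (P1 N) (?E t (PN N))))"
    using JB by (simp add: algebra_simps)
  show ?thesis using c1 c2 c3 c4 c5 by blast
qed


end
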